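(* Assume $\langle f\rangle_X=0$ and that $\psi$ satisfies (A1) and (A2). Let $u$ be the solution of the atomistic problem and $u^H$ the solution of the HQC problem. Then there exist constants $C_6,C_7$, depending only on $c_\psi,C_\psi,C'_\psi$ and $p$ (independent of $\epsilon$, $H$ and $f$), such that \[ \|u^H-u\|_{L^2}\le (C_6H^2+C_7\epsilon)\|f\|_{L^2}+\|e_{\rm mod}\|_{L^2}. \]
   Context: Let $\epsilon>0$, $N,p$ positive integers with $N/p\in\mathbb N$ and normalization $N\epsilon=1$; $X_i=\epsilon i$, $Y_j=j$. $U^N_{\rm per}(\epsilon\mathbb Z)$: functions $u:\epsilon\mathbb Z\to\mathbb R$ with $u(X_{i+N})=u(X_i)$; $U^N_\#(\epsilon\mathbb Z)$: those with $\langle u\rangle_X:=\frac1N\sum_{i=1}^Nu(X_i)=0$. $\langle u,v\rangle_X=\frac1N\sum_{i=1}^Nu(X_i)v(X_i)$, $Du(X_i)=(u(X_{i+1})-u(X_i))/\epsilon$, $\|u\|_{L^2}=\langle u,u\rangle_X^{1/2}$. $U^p_\#(\epsilon\mathbb Z)$: $p$-periodic functions on $\epsilon\mathbb Z$ with $\sum_{i=1}^p w(X_i)=0$. Two-scale functions $g:\epsilon\mathbb Z\times\mathbb Z\to\mathbb R$ satisfy $g(X_{i+N},Y_j)=g(X_i,Y_j)=g(X_i,Y_{j+p})$; $D_Xg(X_i,Y_j)=(g(X_{i+1},Y_j)-g(X_i,Y_j))/\epsilon$, $\langle g\rangle_Y(X_i)=\frac1p\sum_{j=1}^pg(X_i,Y_j)$,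 $\|g\|_{L^\infty(N,p)}=\max_{1\le i\le N,1\le j\le p}|g|$. $\psi$ is a two-scale function with (A1) $0<c_\psi\le\psi\le C_\psi$ and (A2) $\|D_X\psi\|_{L^\infty(N,p)}\le C'_\psi$. $\psi^\epsilon(X_i)=\psi(X_i,X_i/\epsilon)$, $\psi^0(X_i)=\langle1/\psi(X_i,\cdot)\rangle_Y^{-1}$. $f\in U^N_{\rm per}(\epsilon\mathbb Z)$. Atomistic problem: $u\in U^N_\#(\epsilon\mathbb Z)$ with $\langle\psi^\epsilon Du,Dv\rangle_X=\langle f,v\rangle_X$ for all $v\in U^N_{\rm per}(\epsilon\mathbb Z)$. HQC method: fix indices $1=i_1<\dots<i_K\le N$, $i_{K+1}=N+1$, elements $S_k=\{X_i:i_k\le i<i_{k+1}\}$, $H_k=\epsilon(i_{k+1}-i_k)$, $H=\max_kH_k$. $U^H_{\rm per}$: $v\in U^N_{\rm per}(\epsilon\mathbb Z)$ affine on each $\{X_i:i_k\le i\le i_{k+1}\}$; $U^H_\#=U^H_{\rm per}\cap U^N_\#(\epsilon\mathbb Z)$. In each $S_k$ choose a sampling domain $S_k^{\rm rep}=\{X_i:i_k^{\rm rep}\le i<i_k^{\rm rep}+p\}\subset S_k$ and a collocation index with $X_{i_k^{\rm coll}}\in S_k^{\rm rep}$; $\psi^\epsilon_{{\rm coll},k}(X_i)=\psi(X_{i_k^{\rm coll}},X_i/\epsilon)$, $\langle a,b\rangle_{S_k^{\rm rep}}=\frac1p\sum_{X_i\in S_k^{\rm rep}}a(X_i)b(X_i)$.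 For $v^H\in U^H_{\rm per}$ let $\ell_k$ be the affine function on $\epsilon\mathbb Z$ equal to $v^H$ on $S_k$; $\mathcal R_k(v^H)=\ell_k+w$ with $w\in U^p_\#(\epsilon\mathbb Z)$ such that $\langle\psi^\epsilon_{{\rm coll},k}D(\ell_k+w),Ds\rangle_{S_k^{\rm rep}}=0$ for all $s\in U^p_\#(\epsilon\mathbb Z)$. HQC problem: $u^H\in U^H_\#$ with $\sum_{k=1}^KH_k\langle\psi^\epsilon_{{\rm coll},k}D\mathcal R_k(u^H),D\mathcal R_k(v^H)\rangle_{S_k^{\rm rep}}=\langle f,v^H\rangle_X$ for all $v^H\in U^H_\#$. Modeling error: $e_{\rm mod}=u^H-\tilde u^H$, where $\tilde u^H\in U^H_\#$ solves $\langle\psi^0D\tilde u^H,Dv^H\rangle_X=\langle f,v^H\rangle_X$ for all $v^H\in U^H_\#$. *)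

theory Defs
  imports Complex_Main
begin

text \<open>Lattice points X_i = eps*i with eps = 1/N are encoded by their integer
index i; a function u on eps*Z is a map int => real (u i = u(X_i)).  A two-scale function
g(X_i,Y_j) is a map int => int => real (g i j).  Hence psi^eps(X_i) = psi(X_i, X_i/eps) = g i i.\<close>

definition eps :: "nat \<Rightarrow> real" where
  "eps N = 1 / real N"

definition per :: "int \<Rightarrow> (int \<Rightarrow> real) \<Rightarrow> bool" where
  "per n u \<longleftrightarrow> (\<forall>i. u (i + n) = u i)"

definition avgX :: "nat \<Rightarrow> (int \<Rightarrow> real) \<Rightarrow> real" where
  "avgX N u = (1 / real N) * (\<Sum>i = 1..int N. u i)"

definition ipX :: "nat \<Rightarrow> (int \<Rightarrow> real) \<Rightarrow> (int \<Rightarrow> real) \<Rightarrow> real" where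
  "ipX N u v = (1 / real N) * (\<Sum>i = 1..int N. u i * v i)"

definition normX :: "nat \<Rightarrow> (int \<Rightarrow> real) \<Rightarrow> real" where
  "normX N u = sqrt (ipX N u u)"

definition Dd :: "nat \<Rightarrow> (int \<Rightarrow> real) \<Rightarrow> int \<Rightarrow> real" where
  "Dd N u i = (u (i + 1) - u i) / eps N"

definition UN_per :: "nat \<Rightarrow> (int \<Rightarrow> real) \<Rightarrow> bool" where
  "UN_per N u \<longleftrightarrow> per (int N) u"

definition UN_mean0 :: "nat \<Rightarrow> (int \<Rightarrow> real) \<Rightarrow> bool" where
  "UN_mean0 N u \<longleftrightarrow> UN_per N u \<and> avgX N u = 0"

definition Up_mean0 :: "nat \<Rightarrow> (int \<Rightarrow> real) \<Rightarrow> bool" where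
  "Up_mean0 p w \<longleftrightarrow> per (int p) w \<and> (\<Sum>i = 1..int p. w i) = 0"

definition two_scale :: "nat \<Rightarrow> nat \<Rightarrow> (int \<Rightarrow> int \<Rightarrow> real) \<Rightarrow> bool" where
  "two_scale N p g \<longleftrightarrow> (\<forall>i j. g (i + int N) j = g i j \<and> g i (j + int p) = g i j)"

definition DX :: "nat \<Rightarrow> (int \<Rightarrow> int \<Rightarrow> real) \<Rightarrow> int \<Rightarrow> int \<Rightarrow> real" where
  "DX N g i j = (g (i + 1) j - g i j) / eps N"

definition avgY :: "nat \<Rightarrow> (int \<Rightarrow> int \<Rightarrow> real) \<Rightarrow> int \<Rightarrow> real" where
  "avgY p g i = (1 / real p) * (\<Sum>j = 1..int p. g i j)"

definition Linf_Np :: "nat \<Rightarrow> nat \<Rightarrow> (int \<Rightarrow> int \<Rightarrow> real) \<Rightarrow> real" where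
  "Linf_Np N p g = Max {\<bar>g i j\<bar> | i j. 1 \<le> i \<and> i \<le> int N \<and> 1 \<le> j \<and> j \<le> int p}"

definition psi_eps :: "(int \<Rightarrow> int \<Rightarrow> real) \<Rightarrow> int \<Rightarrow> real" where
  "psi_eps psi i = psi i i"

definition psi0 :: "nat \<Rightarrow> (int \<Rightarrow> int \<Rightarrow> real) \<Rightarrow> int \<Rightarrow> real" where
  "psi0 p psi i = 1 / avgY p (\<lambda>i j. 1 / psi i j) i"

definition mesh :: "nat \<Rightarrow> nat \<Rightarrow> (nat \<Rightarrow> int) \<Rightarrow> bool" where
  "mesh N K idx \<longleftrightarrow> 1 \<le> K \<and> idx 1 = 1 \<and> idx (K + 1) = int N + 1 \<and>
     (\<forall>k \<in> {1..K}. idx k < idx (Suc k))"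

definition Hk :: "nat \<Rightarrow> (nat \<Rightarrow> int) \<Rightarrow> nat \<Rightarrow> real" where
  "Hk N idx k = eps N * real_of_int (idx (Suc k) - idx k)"

definition Hmax :: "nat \<Rightarrow> nat \<Rightarrow> (nat \<Rightarrow> int) \<Rightarrow> real" where
  "Hmax N K idx = Max (Hk N idx ` {1..K})"

definition UH_per :: "nat \<Rightarrow> nat \<Rightarrow> (nat \<Rightarrow> int) \<Rightarrow> (int \<Rightarrow> real) \<Rightarrow> bool" where
  "UH_per N K idx v \<longleftrightarrow> UN_per N v \<and>
     (\<forall>k \<in> {1..K}. \<exists>a b. \<forall>i. idx k \<le> i \<and> i \<le> idx (Suc k) \<longrightarrow>
         v i = a + b * (eps N * real_of_int i))"

definition UH_mean0 :: "nat \<Rightarrow> nat \<Rightarrow> (nat \<Rightarrow> int) \<Rightarrow> (int \<Rightarrow> real) \<Rightarrow> bool" where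
  "UH_mean0 N K idx v \<longleftrightarrow> UH_per N K idx v \<and> UN_mean0 N v"

definition sampling :: "nat \<Rightarrow> nat \<Rightarrow> (nat \<Rightarrow> int) \<Rightarrow> (nat \<Rightarrow> int) \<Rightarrow> (nat \<Rightarrow> int) \<Rightarrow> bool" where
  "sampling p K idx rep coll \<longleftrightarrow> (\<forall>k \<in> {1..K}.
     idx k \<le> rep k \<and> rep k + int p \<le> idx (Suc k) \<and> rep k \<le> coll k \<and> coll k < rep k + int p)"

definition ipRep :: "nat \<Rightarrow> int \<Rightarrow> (int \<Rightarrow> real) \<Rightarrow> (int \<Rightarrow> real) \<Rightarrow> real" where
  "ipRep p r a b = (1 / real p) * (\<Sum>i = r..r + int p - 1. a i * b i)"

definition ell :: "(nat \<Rightarrow> int) \<Rightarrow> nat \<Rightarrow> (int \<Rightarrow> real) \<Rightarrow> int \<Rightarrow> real" where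
  "ell idx k v i = v (idx k) + real_of_int (i - idx k) *
      (v (idx (Suc k)) - v (idx k)) / real_of_int (idx (Suc k) - idx k)"

definition cell_sol :: "nat \<Rightarrow> nat \<Rightarrow> (int \<Rightarrow> real) \<Rightarrow> int \<Rightarrow> (int \<Rightarrow> real) \<Rightarrow> (int \<Rightarrow> real) \<Rightarrow> bool" where
  "cell_sol N p psic r l w \<longleftrightarrow> Up_mean0 p w \<and>
     (\<forall>s. Up_mean0 p s \<longrightarrow>
        ipRep p r (\<lambda>i. psic i * Dd N (\<lambda>j. l j + w j) i) (Dd N s) = 0)"

definition psi_coll :: "(int \<Rightarrow> int \<Rightarrow> real) \<Rightarrow> (nat \<Rightarrow> int) \<Rightarrow> nat \<Rightarrow> int \<Rightarrow> real" where
  "psi_coll psi coll k i = psi (coll k) i"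

definition Rk :: "nat \<Rightarrow> nat \<Rightarrow> (int \<Rightarrow> int \<Rightarrow> real) \<Rightarrow> (nat \<Rightarrow> int) \<Rightarrow> (nat \<Rightarrow> int) \<Rightarrow> (nat \<Rightarrow> int)
    \<Rightarrow> nat \<Rightarrow> (int \<Rightarrow> real) \<Rightarrow> int \<Rightarrow> real" where
  "Rk N p psi idx rep coll k v = (\<lambda>i. ell idx k v i +
      (THE w. cell_sol N p (psi_coll psi coll k) (rep k) (ell idx k v) w) i)"

definition hqc_form :: "nat \<Rightarrow> nat \<Rightarrow> nat \<Rightarrow> (int \<Rightarrow> int \<Rightarrow> real) \<Rightarrow> (nat \<Rightarrow> int) \<Rightarrow> (nat \<Rightarrow> int)
    \<Rightarrow> (nat \<Rightarrow> int) \<Rightarrow> (int \<Rightarrow> real) \<Rightarrow> (int \<Rightarrow> real) \<Rightarrow> real" where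
  "hqc_form N p K psi idx rep coll u v = (\<Sum>k = 1..K. Hk N idx k *
      ipRep p (rep k) (\<lambda>i. psi_coll psi coll k i * Dd N (Rk N p psi idx rep coll k u) i)
                      (Dd N (Rk N p psi idx rep coll k v)))"

end

theory Submission
  imports Defs "HOL-Analysis.L2_Norm"
begin

lemma sum_ivl_split:
  fixes a m b :: int
  assumes "a \<le> m" "m \<le> b"
  shows "sum h {a..<b} = sum h {a..<m} + sum h {m..<b}"
proof -
  have "{a..<b} = {a..<m} \<union> {m..<b}" using assms by auto
  moreover have "{a..<m} \<inter> {m..<b} = {}" by auto
  ultimately show ?thesis by (simp add: sum.union_disjoint)
qed

lemma sum_ivl_last:
  fixes a b :: int
  assumes "a \<le> b"
  shows "sum h {a..<b+1} = sum h {a..<b} + h b"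
proof -
  have "{a..<b+1} = insert b {a..<b}" using assms by auto
  thus ?thesis by (simp add: add.commute)
qed

lemma sum_cl_ivl: "sum h {a..(b::int)} = sum h {a..<b+1}"
proof -
  have "{a..b} = {a..<b+1}" by auto
  thus ?thesis by simp
qed

lemma sum_telescope_int:
  fixes a b :: int and g :: "int \<Rightarrow> 'a::ab_group_add"
  assumes "a \<le> b"
  shows "sum (\<lambda>i. g (i+1) - g i) {a..<b} = g b - g a"
  using assms
proof (induction b rule: int_ge_induct)
  case base then show ?case by simp
next
  case (step i) then show ?case by (simp add: sum_ivl_last)
qed

lemma per_shift_mult:
  assumes "per n g"
  shows "g (i + n * q) = g i"
proof -
  have up: "g (i + n * int m) = g i" for i m
  proof (induction m)
    case 0 then show ?case by simp
  next
    case (Suc m)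
    have "g (i + n * int (Suc m)) = g ((i + n * int m) + n)" by (simp add: algebra_simps)
    also have "\<dots> = g (i + n * int m)" using assms by (simp add: per_def)
    finally show ?case using Suc by simp
  qed
  show ?thesis
  proof (cases "q \<ge> 0")
    case True then show ?thesis using up[of i "nat q"] by simp
  next
    case False
    have "g ((i + n*q) + n * int (nat (-q))) = g (i + n*q)" by (rule up)
    then show ?thesis using False by (simp add: algebra_simps)
  qed
qed

lemma per_mod:
  assumes "per n g" "n > 0"
  shows "g i = g ((i - 1) mod n + 1)"
proof -
  have "(i - 1) mod n + 1 = i + n * (- ((i-1) div n))"
    by (simp add: algebra_simps minus_mod_eq_mult_div [symmetric])
  then show ?thesis using per_shift_mult[OF assms(1), of i "-((i-1) div n)"] by simp
qed

lemma per_eq: "per n g \<Longrightarrow> x = y + n \<Longrightarrow> g x = g y"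
  by (simp add: per_def)

lemma per_mult:
  assumes "per n g" shows "per (n * m) g"
  unfolding per_def using per_shift_mult[OF assms] by (metis mult.assoc)

lemma per_sum_shift:
  fixes g :: "int \<Rightarrow> real"
  assumes "per n g" "n \<ge> 0"
  shows "sum g {a..<a+n} = sum g {b..<b+n}"
proof -
  have step: "sum g {x+1..<x+1+n} = sum g {x..<x+n}" for x
  proof -
    have "sum g {x..<x+1+n} = sum g {x..<x+n} + g (x+n)"
      using sum_ivl_last[of x "x+n" g] assms(2) by (simp add: add.commute add.left_commute)
    moreover have "sum g {x..<x+1+n} = g x + sum g {x+1..<x+1+n}"
      using sum_ivl_split[of x "x+1" "x+1+n" g] assms(2) sum_ivl_last[of x x g] by simp
    moreover have "g (x+n) = g x" using assms(1) by (simp add: per_def)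
    ultimately show ?thesis by (metis add_right_cancel add.commute)
  qed
  have all: "sum g {a..<a+n} = sum g {0..<0+n}" for a
  proof (induction a rule: int_induct[where k=0])
    case base then show ?case by simp
  next
    case (step1 i) then show ?case using step[of i] by simp
  next
    case (step2 i) then show ?case using step[of "i-1"] by simp
  qed
  show ?thesis using all[of a] all[of b] by simp
qed

lemma sum_shift1:
  fixes a b :: int
  assumes "a \<le> b"
  shows "sum (\<lambda>i. h (i+1)) {a..<b} = sum h {a+1..<b+1}"
  using assms
proof (induction b rule: int_ge_induct)
  case base then show ?case by simp
next
  case (step i)
  have "sum h {a+1..<i+1+1} = sum h {a+1..<i+1} + h (i+1)" using step(1) sum_ivl_last[of "a+1" "i+1" h] by simp
  then show ?case using step by (simp add: sum_ivl_last)
qed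

lemma sum_restrict_ivl:
  fixes a b a' b' :: int
  assumes "a \<le> a'" "b' \<le> b"
  shows "sum (\<lambda>i. if a' \<le> i \<and> i < b' then h i else 0) {a..<b} = sum h {a'..<b'}"
proof -
  have "sum (\<lambda>i. if a' \<le> i \<and> i < b' then h i else 0) {a..<b}
      = sum h ({a..<b} \<inter> {i. a' \<le> i \<and> i < b'})"
    by (simp add: sum.inter_restrict)
  also have "{a..<b} \<inter> {i. a' \<le> i \<and> i < b'} = {a'..<b'}" using assms by auto
  finally show ?thesis .
qed

lemma inv_diff_le:
  fixes x y c :: real
  assumes "c \<le> x" "c \<le> y" "0 < c"
  shows "\<bar>1/x - 1/y\<bar> \<le> \<bar>x - y\<bar> / c\<^sup>2"
proof -
  have xp: "x > 0" "y > 0" using assms by auto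
  have "\<bar>1/x - 1/y\<bar> = \<bar>x - y\<bar> / (x*y)" using xp by (simp add: field_simps abs_div abs_mult)
  also have "\<dots> \<le> \<bar>x - y\<bar> / c\<^sup>2"
  proof (rule divide_left_mono)
    show "c\<^sup>2 \<le> x*y" using assms by (simp add: power2_eq_square mult_mono)
  qed (use assms in \<open>auto simp: power2_eq_square\<close>)
  finally show ?thesis .
qed

locale hs =
  fixes N p :: nat and c C C' :: real and psi :: "int \<Rightarrow> int \<Rightarrow> real" and f :: "int \<Rightarrow> real"
    and K :: nat and idx :: "nat \<Rightarrow> int" and u utH :: "int \<Rightarrow> real"
  assumes N1: "1 \<le> N" and p1: "1 \<le> p" and pdvd: "p dvd N"
   and ts: "two_scale N p psi"
   and bnd: "\<forall>i j. c \<le> psi i j \<and> psi i j \<le> C" and cpos: "0 < c"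
   and lip: "\<forall>i j. \<bar>psi (i+1) j - psi i j\<bar> \<le> eps N * C'"
   and fper: "per (int N) f"
   and mesh: "mesh N K idx"
   and u0: "UN_mean0 N u"
   and ueq: "\<forall>v. UN_per N v \<longrightarrow> ipX N (\<lambda>i. psi_eps psi i * Dd N u i) (Dd N v) = ipX N f v"
   and t0: "UH_mean0 N K idx utH"
   and teq: "\<forall>v. UH_mean0 N K idx v \<longrightarrow> ipX N (\<lambda>i. psi0 p psi i * Dd N utH i) (Dd N v) = ipX N f v"
begin

lemma epos: "eps N > 0" using N1 by (simp add: eps_def)
lemma eN: "eps N * real N = 1" using N1 by (simp add: eps_def)
lemma Npos: "int N > 0" using N1 by simp

lemma psi_pos: "psi i j > 0" using bnd cpos by (meson less_le_trans)
lemma cC: "c \<le> C" using bnd by (meson order_trans)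
lemma Cpos: "C > 0" using cC cpos by simp
lemma C'nn: "C' \<ge> 0"
proof -
  have "0 \<le> eps N * C'" using lip by (meson abs_ge_zero order_trans)
  then show ?thesis using epos by (simp add: zero_le_mult_iff)
qed

lemma per_psi_i: "per (int N) (\<lambda>i. psi i j)" using ts by (simp add: two_scale_def per_def)
lemma per_psi_j: "per (int p) (\<lambda>j. psi i j)" using ts by (simp add: two_scale_def per_def)
lemma per_psi_jN: "per (int N) (\<lambda>j. psi i j)"
proof -
  obtain m where "N = p * m" using pdvd by (auto simp: dvd_def)
  then have "int N = int p * int m" by simp
  then show ?thesis using per_mult[OF per_psi_j, where m="int m"] by simp
qed
lemma per_diag: "per (int N) (\<lambda>i. psi i i)"
  using per_psi_i per_psi_jN unfolding per_def by metis

lemma uper: "per (int N) u" using u0 by (simp add: UN_mean0_def UN_per_def)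
lemma tper: "per (int N) utH" using t0 by (simp add: UH_mean0_def UN_mean0_def UN_per_def)

lemma ipX_D: "ipX N a (Dd N v) = (\<Sum>i\<in>{1..<int N+1}. a i * (v (i+1) - v i))"
proof -
  have "ipX N a (Dd N v) = (\<Sum>i\<in>{1..<int N+1}. (1/real N) * (a i * (v (i+1) - v i) / eps N))"
    by (simp add: ipX_def Dd_def sum_cl_ivl sum_distrib_left)
  also have "\<dots> = (\<Sum>i\<in>{1..<int N+1}. a i * (v (i+1) - v i))"
    using N1 by (intro sum.cong) (auto simp: eps_def)
  finally show ?thesis .
qed

lemma ipX_f: "ipX N f v = eps N * (\<Sum>i\<in>{1..<int N+1}. f i * v i)"
  by (simp add: ipX_def eps_def sum_cl_ivl)

lemma sbp:
  assumes "per (int N) s" "per (int N) v"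
  shows "(\<Sum>i\<in>{1..<int N+1}. s i * (v (i+1) - v i)) = (\<Sum>i\<in>{1..<int N+1}. (s (i-1) - s i) * v i)"
proof -
  let ?h = "\<lambda>i. s (i-1) * v i"
  have ph: "per (int N) ?h" unfolding per_def
  proof
    fix i
    have "s (i + int N - 1) = s (i-1)" by (rule per_eq[OF assms(1)]) simp
    moreover have "v (i + int N) = v i" by (rule per_eq[OF assms(2)]) simp
    ultimately show "?h (i + int N) = ?h i" by simp
  qed
  have "(\<Sum>i\<in>{1..<int N+1}. s i * v (i+1)) = (\<Sum>i\<in>{1..<int N+1}. ?h (i+1))" by simp
  also have "\<dots> = sum ?h {1+1..<int N+1+1}" using sum_shift1[of 1 "int N+1" ?h] by simp
  also have "\<dots> = sum ?h {1..<1 + int N}" using per_sum_shift[OF ph, of 2 1] by (simp add: add.commute)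
  finally have e1: "(\<Sum>i\<in>{1..<int N+1}. s i * v (i+1)) = sum ?h {1..<int N+1}" by (simp add: add.commute)
  show ?thesis using e1 by (simp add: algebra_simps sum_subtractf)
qed

definition sg :: "int \<Rightarrow> real" where "sg i = psi i i * Dd N u i"

lemma sgper: "per (int N) sg"
  unfolding per_def
proof
  fix i
  have "u (i + int N + 1) = u (i+1)" by (rule per_eq[OF uper]) simp
  moreover have "u (i + int N) = u i" by (rule per_eq[OF uper]) simp
  moreover have "psi (i + int N) (i + int N) = psi i i" by (rule per_eq[OF per_diag]) simp
  ultimately show "sg (i + int N) = sg i" by (simp add: sg_def Dd_def)
qed

lemma sg_rec: "sg (i+1) = sg i - eps N * f (i+1)"
proof -
  let ?g = "\<lambda>i. sg (i-1) - sg i - eps N * f i"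
  have pg: "per (int N) ?g" unfolding per_def
  proof
    fix i
    have "sg (i + int N - 1) = sg (i-1)" by (rule per_eq[OF sgper]) simp
    moreover have "sg (i + int N) = sg i" by (rule per_eq[OF sgper]) simp
    moreover have "f (i + int N) = f i" by (rule per_eq[OF fper]) simp
    ultimately show "?g (i + int N) = ?g i" by simp
  qed
  have key: "(\<Sum>i\<in>{1..<int N+1}. ?g i * v i) = 0" if "per (int N) v" for v
  proof -
    have "ipX N (\<lambda>i. psi_eps psi i * Dd N u i) (Dd N v) = ipX N f v"
      using ueq that by (simp add: UN_per_def)
    then have "(\<Sum>i\<in>{1..<int N+1}. sg i * (v (i+1) - v i)) = eps N * (\<Sum>i\<in>{1..<int N+1}. f i * v i)"
      by (simp add: ipX_D ipX_f psi_eps_def sg_def)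
    then have "(\<Sum>i\<in>{1..<int N+1}. (sg (i-1) - sg i) * v i) = (\<Sum>i\<in>{1..<int N+1}. eps N * f i * v i)"
      using sbp[OF sgper that] by (simp add: sum_distrib_left mult.assoc)
    then show ?thesis by (simp add: algebra_simps sum_subtractf sum.distrib)
  qed
  have "(\<Sum>i\<in>{1..<int N+1}. ?g i * ?g i) = 0" using key[OF pg] .
  then have z: "\<forall>i\<in>{1..<int N+1}. ?g i * ?g i = 0"
    by (subst (asm) sum_nonneg_eq_0_iff) auto
  have "?g i = 0" for i
  proof -
    have "?g i = ?g ((i-1) mod int N + 1)" using per_mod[OF pg Npos] .
    moreover have "(i-1) mod int N + 1 \<in> {1..<int N+1}"
    proof -
      have "(i-1) mod int N < int N" "0 \<le> (i-1) mod int N" using Npos by auto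
      then show ?thesis by simp
    qed
    ultimately show ?thesis using z by (metis (no_types, lifting) mult_eq_0_iff)
  qed
  from this[of "i+1"] show ?thesis by simp
qed


definition bb :: "int \<Rightarrow> real" where "bb i = 1 / psi i i"
definition Lf :: real where "Lf = eps N * (\<Sum>i\<in>{1..<int N+1}. \<bar>f i\<bar>)"

lemma bb_pos: "bb i > 0" using psi_pos by (simp add: bb_def)
lemma Du_sg: "Dd N u i = sg i * bb i"
  using psi_pos[of i i] by (simp add: sg_def bb_def)

lemma per_telescope:
  assumes "per (int N) g"
  shows "(\<Sum>i\<in>{1..<int N+1}. g (i+1) - g i) = 0"
proof -
  have "(\<Sum>i\<in>{1..<int N+1}. g (i+1) - g i) = g (int N + 1) - g 1"
    using sum_telescope_int[of 1 "int N + 1" g] by simp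
  also have "g (int N + 1) = g 1" by (rule per_eq[OF assms]) simp
  finally show ?thesis by simp
qed

lemma sum_sgbb: "(\<Sum>i\<in>{1..<int N+1}. sg i * bb i) = 0"
proof -
  have "(\<Sum>i\<in>{1..<int N+1}. sg i * bb i) = (\<Sum>i\<in>{1..<int N+1}. (u (i+1) - u i) / eps N)"
    by (simp add: Du_sg[symmetric] Dd_def)
  also have "\<dots> = (\<Sum>i\<in>{1..<int N+1}. u (i+1) - u i) / eps N" by (simp add: sum_divide_distrib)
  finally show ?thesis using per_telescope[OF uper] by simp
qed

lemma sg_var:
  assumes "a \<le> b"
  shows "\<bar>sg b - sg a\<bar> \<le> eps N * (\<Sum>i\<in>{a+1..<b+1}. \<bar>f i\<bar>)"
  using assms
proof (induction b rule: int_ge_induct)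
  case base then show ?case by simp
next
  case (step i)
  have "\<bar>sg (i+1) - sg a\<bar> \<le> \<bar>sg i - sg a\<bar> + eps N * \<bar>f (i+1)\<bar>"
  proof -
    have "\<bar>eps N * f (i+1)\<bar> = eps N * \<bar>f (i+1)\<bar>" using epos by (simp add: abs_mult)
    then show ?thesis using sg_rec[of i] by linarith
  qed
  also have "\<dots> \<le> eps N * (\<Sum>i\<in>{a+1..<i+1}. \<bar>f i\<bar>) + eps N * \<bar>f (i+1)\<bar>" using step by simp
  also have "\<dots> = eps N * (\<Sum>i\<in>{a+1..<i+1+1}. \<bar>f i\<bar>)"
    using sum_ivl_last[of "a+1" "i+1" "\<lambda>i. \<bar>f i\<bar>"] step(1) by (simp add: algebra_simps)
  finally show ?case .
qed

lemma sum_abs_mono_ivl: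
  fixes a b a' b' :: int
  assumes "a' \<le> a" "b \<le> b'"
  shows "(\<Sum>i\<in>{a..<b}. \<bar>g i\<bar>) \<le> (\<Sum>i\<in>{a'..<b'}. \<bar>g i::real\<bar>)"
  by (rule sum_mono2) (use assms in auto)

lemma sg_pair:
  assumes "1 \<le> a" "a \<le> int N" "1 \<le> b" "b \<le> int N"
  shows "\<bar>sg a - sg b\<bar> \<le> Lf"
proof -
  have gen: "\<bar>sg y - sg x\<bar> \<le> Lf" if "1 \<le> x" "x \<le> y" "y \<le> int N" for x y
  proof -
    have "\<bar>sg y - sg x\<bar> \<le> eps N * (\<Sum>i\<in>{x+1..<y+1}. \<bar>f i\<bar>)" using sg_var that by simp
    also have "\<dots> \<le> Lf" unfolding Lf_def
      using sum_abs_mono_ivl[of 1 "x+1" "y+1" "int N+1" f] that epos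
      by (intro mult_left_mono) auto
    finally show ?thesis .
  qed
  show ?thesis
  proof (cases "a \<le> b")
    case True then show ?thesis using gen[of a b] assms by (simp add: abs_minus_commute)
  next
    case False then show ?thesis using gen[of b a] assms by simp
  qed
qed

lemma rep_in: "(i-1) mod int N + 1 \<in> {1..int N}"
proof -
  have "(i-1) mod int N < int N" "0 \<le> (i-1) mod int N" using Npos by auto
  then show ?thesis by simp
qed

lemma sg_bound: "\<bar>sg i\<bar> \<le> Lf"
proof -
  define i0 where "i0 = (i-1) mod int N + 1"
  have i0: "1 \<le> i0" "i0 \<le> int N" using rep_in[of i] by (auto simp: i0_def)
  have si: "sg i = sg i0" unfolding i0_def by (rule per_mod[OF sgper Npos])
  have ex1: "\<exists>l\<in>{1..<int N+1}. sg l \<le> 0"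
  proof (rule ccontr)
    assume "\<not> ?thesis"
    then have "\<forall>l\<in>{1..<int N+1}. sg l * bb l > 0" using bb_pos by auto
    then have "(\<Sum>i\<in>{1..<int N+1}. sg i * bb i) > 0" by (intro sum_pos) (use Npos in auto)
    then show False using sum_sgbb by simp
  qed
  have ex2: "\<exists>l\<in>{1..<int N+1}. sg l \<ge> 0"
  proof (rule ccontr)
    assume "\<not> ?thesis"
    then have "\<forall>l\<in>{1..<int N+1}. -(sg l * bb l) > 0" using bb_pos by (auto simp: mult_neg_pos)
    then have "(\<Sum>i\<in>{1..<int N+1}. -(sg i * bb i)) > 0" by (intro sum_pos) (use Npos in auto)
    then show False using sum_sgbb by (simp add: sum_negf)
  qed
  obtain l1 where l1: "l1 \<in> {1..<int N+1}" "sg l1 \<le> 0" using ex1 by blast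
  obtain l2 where l2: "l2 \<in> {1..<int N+1}" "sg l2 \<ge> 0" using ex2 by blast
  have "\<bar>sg i0 - sg l1\<bar> \<le> Lf" "\<bar>sg i0 - sg l2\<bar> \<le> Lf"
    using sg_pair i0 l1 l2 by auto
  then have "\<bar>sg i0\<bar> \<le> Lf" using l1 l2 by linarith
  then show ?thesis using si by simp
qed


lemma K1: "1 \<le> K" and idx1: "idx 1 = 1" and idxK: "idx (K+1) = int N + 1"
  and idx_inc: "k \<in> {1..K} \<Longrightarrow> idx k < idx (Suc k)"
  using mesh by (auto simp: mesh_def)

lemma idx_mono:
  assumes "1 \<le> k" "k \<le> k'" "k' \<le> K+1"
  shows "idx k \<le> idx k'"
  using assms(2,3)
proof (induction k' rule: dec_induct)
  case base then show ?case by simp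
next
  case (step m)
  have "idx m < idx (Suc m)" using idx_inc[of m] step assms(1) by auto
  then show ?case using step by simp
qed

lemma idx_strict:
  assumes "1 \<le> k" "k < k'" "k' \<le> K+1"
  shows "idx (Suc k) \<le> idx k'"
  using idx_mono[of "Suc k" k'] assms by simp

lemma idx_range:
  assumes "1 \<le> k" "k \<le> K+1"
  shows "1 \<le> idx k" "idx k \<le> int N + 1"
  using idx_mono[of 1 k] idx_mono[of k "K+1"] assms idx1 idxK by auto

lemma sum_elems:
  assumes "1 \<le> m" "m \<le> K+1"
  shows "sum h {1..<idx m} = (\<Sum>k\<in>{1..<m}. sum h {idx k..<idx (Suc k)})"
  using assms
proof (induction m rule: dec_induct)
  case base then show ?case using idx1 by simp
next
  case (step m)
  have "sum h {1..<idx (Suc m)} = sum h {1..<idx m} + sum h {idx m..<idx (Suc m)}"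
    using idx_range[of m] idx_mono[of m "Suc m"] step by (intro sum_ivl_split) auto
  then show ?case using step by simp
qed

lemma sum_all: "sum h {1..<int N+1} = (\<Sum>k\<in>{1..K}. sum h {idx k..<idx (Suc k)})"
proof -
  have "{1..<K+1} = {1..K}" by auto
  then show ?thesis using sum_elems[of "K+1" h] K1 idxK by simp
qed

definition nk :: "nat \<Rightarrow> int" where "nk k = idx (Suc k) - idx k"

lemma nk_pos: "k \<in> {1..K} \<Longrightarrow> nk k > 0" using idx_inc by (simp add: nk_def)
lemma Hk_eq: "Hk N idx k = eps N * real_of_int (nk k)" by (simp add: Hk_def nk_def)
lemma Hk_pos: "k \<in> {1..K} \<Longrightarrow> Hk N idx k > 0" using nk_pos epos by (simp add: Hk_eq)

lemma sum_Hk: "(\<Sum>k\<in>{1..K}. Hk N idx k) = 1"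
proof -
  have c1: "(\<Sum>i\<in>{idx k..<idx (Suc k)}. (1::real)) = real_of_int (nk k)" if "k \<in> {1..K}" for k
    using nk_pos[OF that] by (simp add: nk_def)
  have "(\<Sum>k\<in>{1..K}. Hk N idx k) = eps N * (\<Sum>k\<in>{1..K}. (\<Sum>i\<in>{idx k..<idx (Suc k)}. (1::real)))"
  proof -
    have "(\<Sum>k\<in>{1..K}. Hk N idx k) = (\<Sum>k\<in>{1..K}. eps N * (\<Sum>i\<in>{idx k..<idx (Suc k)}. (1::real)))"
      by (rule sum.cong) (simp_all only: Hk_eq c1)
    then show ?thesis by (simp only: sum_distrib_left[symmetric])
  qed
  also have "\<dots> = eps N * (\<Sum>i\<in>{1..<int N+1}. (1::real))" by (simp only: sum_all)
  also have "\<dots> = 1" using eN by simp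
  finally show ?thesis .
qed

lemma Hk_le: "k \<in> {1..K} \<Longrightarrow> Hk N idx k \<le> Hmax N K idx"
  unfolding Hmax_def by (rule Max_ge) auto

lemma Hmax_nn: "0 \<le> Hmax N K idx" using Hk_le[of 1] Hk_pos[of 1] K1 by force

lemma elem_disj:
  assumes "k \<in> {1..K}" "k' \<in> {1..K}" "idx k \<le> i" "i < idx (Suc k)" "idx k' \<le> i" "i < idx (Suc k')"
  shows "k = k'"
proof (rule ccontr)
  assume "k \<noteq> k'"
  then consider "k < k'" | "k' < k" by linarith
  then show False
  proof cases
    case 1 then show ?thesis using idx_strict[of k k'] assms by auto
  next
    case 2 then show ?thesis using idx_strict[of k' k] assms by auto
  qed
qed

lemma elem_in:
  assumes "k \<in> {1..K}" "idx k \<le> i" "i < idx (Suc k)"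
  shows "1 \<le> i" "i \<le> int N"
  using idx_range[of k] idx_range[of "Suc k"] assms by auto


definition gk :: "nat \<Rightarrow> real" where "gk k = Dd N utH (idx k)"

lemma Dt_const:
  assumes "k \<in> {1..K}" "idx k \<le> i" "i < idx (Suc k)"
  shows "Dd N utH i = gk k"
proof -
  obtain a b where ab: "\<forall>i. idx k \<le> i \<and> i \<le> idx (Suc k) \<longrightarrow> utH i = a + b * (eps N * real_of_int i)"
    using t0 assms(1) unfolding UH_mean0_def UH_per_def by blast
  have D: "Dd N utH j = b" if "idx k \<le> j" "j < idx (Suc k)" for j
  proof -
    have "utH (j+1) = a + b * (eps N * real_of_int (j+1))" "utH j = a + b * (eps N * real_of_int j)"
      using ab that by auto
    then show ?thesis using epos by (simp add: Dd_def algebra_simps)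
  qed
  show ?thesis unfolding gk_def using D[of i] D[of "idx k"] assms idx_inc[OF assms(1)] by simp
qed

definition rho :: "int \<Rightarrow> real" where "rho i = psi0 p psi i * Dd N utH i - sg i"

lemma orth:
  assumes "UH_mean0 N K idx v"
  shows "(\<Sum>i\<in>{1..<int N+1}. rho i * (v (i+1) - v i)) = 0"
proof -
  have vp: "UN_per N v" using assms by (simp add: UH_mean0_def UH_per_def)
  have "ipX N (\<lambda>i. psi0 p psi i * Dd N utH i) (Dd N v) = ipX N (\<lambda>i. psi_eps psi i * Dd N u i) (Dd N v)"
    using teq assms ueq vp by simp
  then have "(\<Sum>i\<in>{1..<int N+1}. psi0 p psi i * Dd N utH i * (v (i+1) - v i))
      = (\<Sum>i\<in>{1..<int N+1}. sg i * (v (i+1) - v i))"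
    by (simp add: ipX_D psi_eps_def sg_def)
  moreover have "(\<Sum>i\<in>{1..<int N+1}. rho i * (v (i+1) - v i)) =
     (\<Sum>i\<in>{1..<int N+1}. psi0 p psi i * Dd N utH i * (v (i+1) - v i)) - (\<Sum>i\<in>{1..<int N+1}. sg i * (v (i+1) - v i))"
    by (simp add: rho_def left_diff_distrib sum_subtractf)
  ultimately show ?thesis by simp
qed


lemma testfun:
  fixes T :: "int \<Rightarrow> real"
  assumes T0: "(\<Sum>i\<in>{1..<int N+1}. T i) = 0"
    and Tc: "\<forall>k\<in>{1..K}. \<forall>i. idx k \<le> i \<and> i < idx (Suc k) \<longrightarrow> T i = T (idx k)"
  shows "\<exists>v. UH_mean0 N K idx v \<and> (\<forall>i\<in>{1..<int N+1}. v (i+1) - v i = T i)"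
proof -
  define V where "V i = (\<Sum>l\<in>{1..<(i-1) mod int N + 1}. T l)" for i
  have Vd: "V (i+1) - V i = T i" if "1 \<le> i" "i \<le> int N" for i
  proof -
    have m1: "(i-1) mod int N = i - 1" using that by (simp add: mod_pos_pos_trivial)
    show ?thesis
    proof (cases "i < int N")
      case True
      then have "i mod int N = i" using that by (simp add: mod_pos_pos_trivial)
      then have "V (i+1) = (\<Sum>l\<in>{1..<i+1}. T l)" by (simp add: V_def)
      also have "\<dots> = (\<Sum>l\<in>{1..<i}. T l) + T i" using that sum_ivl_last[of 1 i T] by simp
      finally show ?thesis using m1 by (simp add: V_def)
    next
      case False
      then have iN: "i = int N" using that by simp
      have "V (i+1) = 0" using iN by (simp add: V_def)
      moreover have "V i = (\<Sum>l\<in>{1..<int N}. T l)" using m1 iN by (simp add: V_def)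
      moreover have "(\<Sum>l\<in>{1..<int N}. T l) + T (int N) = 0"
        using T0 sum_ivl_last[of 1 "int N" T] Npos by simp
      ultimately show ?thesis using iN by simp
    qed
  qed
  have Vp: "per (int N) V" unfolding per_def V_def
  proof
    fix i
    have "(i + int N - 1) mod int N = (i - 1) mod int N"
      by (metis add.commute add_diff_eq mod_add_self1)
    then show "(\<Sum>l\<in>{1..<(i + int N - 1) mod int N + 1}. T l) = (\<Sum>l\<in>{1..<(i-1) mod int N + 1}. T l)"
      by simp
  qed
  define m where "m = avgX N V"
  define v where "v i = V i - m" for i
  have vd: "v (i+1) - v i = V (i+1) - V i" for i by (simp add: v_def)
  have vp: "per (int N) v" using Vp by (simp add: per_def v_def)
  have aff: "\<exists>a b. \<forall>i. idx k \<le> i \<and> i \<le> idx (Suc k) \<longrightarrow> v i = a + b * (eps N * real_of_int i)"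
    if k: "k \<in> {1..K}" for k
  proof -
    have lin: "V i = V (idx k) + T (idx k) * real_of_int (i - idx k)" if "idx k \<le> i" "i \<le> idx (Suc k)" for i
      using that
    proof (induction i rule: int_ge_induct)
      case base then show ?case by simp
    next
      case (step j)
      have j: "idx k \<le> j" "j < idx (Suc k)" using step by auto
      have "1 \<le> j" "j \<le> int N" using elem_in[OF k j] by auto
      then have "V (j+1) = V j + T j" using Vd[of j] by simp
      moreover have "T j = T (idx k)"
      proof -
        have "idx k \<le> j \<and> j < idx (Suc k) \<longrightarrow> T j = T (idx k)" by (rule spec[OF bspec[OF Tc k]])
        moreover have "idx k \<le> j \<and> j < idx (Suc k)" using j by (rule conjI)
        ultimately show ?thesis by (rule mp)
      qed
      ultimately show ?case using step by (simp add: algebra_simps)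
    qed
    show ?thesis
    proof (intro exI allI impI)
      fix i assume "idx k \<le> i \<and> i \<le> idx (Suc k)"
      then have "v i = V (idx k) + T (idx k) * real_of_int (i - idx k) - m" proof -
        assume a: "idx k \<le> i \<and> i \<le> idx (Suc k)"
        have "V i = V (idx k) + T (idx k) * real_of_int (i - idx k)" using a by (intro lin) auto
        then show ?thesis unfolding v_def by simp
      qed
      moreover have "(T (idx k) / eps N) * (eps N * real_of_int i) = T (idx k) * real_of_int i"
        using epos by simp
      ultimately show "v i = (V (idx k) - T (idx k) * real_of_int (idx k) - m) + (T (idx k) / eps N) * (eps N * real_of_int i)"
        by (simp add: right_diff_distrib)
    qed
  qed
  have av: "avgX N v = 0"
  proof -
    have "avgX N v = (1 / real N) * ((\<Sum>i = 1..int N. V i) - real N * m)"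
      by (simp add: avgX_def v_def sum_subtractf)
    also have "\<dots> = avgX N V - m" using N1 by (simp add: avgX_def field_simps)
    finally show ?thesis by (simp add: m_def)
  qed
  have "UH_mean0 N K idx v"
    unfolding UH_mean0_def UH_per_def UN_mean0_def UN_per_def using vp aff av by blast
  moreover have "\<forall>i\<in>{1..<int N+1}. v (i+1) - v i = T i" using Vd vd by auto
  ultimately show ?thesis by blast
qed


lemma ind_elem:
  assumes "k \<in> {1..K}" "k' \<in> {1..K}" "idx k' \<le> i" "i < idx (Suc k')"
  shows "(idx k \<le> i \<and> i < idx (Suc k)) \<longleftrightarrow> k = k'"
  using elem_disj[of k k' i] assms by auto

lemma sum_ind_elem:
  assumes "k \<in> {1..K}"
  shows "(\<Sum>i\<in>{1..<int N+1}. if idx k \<le> i \<and> i < idx (Suc k) then h i else 0) = sum h {idx k..<idx (Suc k)}"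
  using idx_range[of k] idx_range[of "Suc k"] assms by (intro sum_restrict_ivl) auto

lemma sum_one_elem:
  assumes "k \<in> {1..K}"
  shows "(\<Sum>i\<in>{idx k..<idx (Suc k)}. (1::real)) = real_of_int (nk k)"
  using nk_pos[OF assms] by (simp add: nk_def)

definition lam :: real where "lam = (1 / real_of_int (nk 1)) * sum rho {idx 1..<idx (Suc 1)}"

lemma rho_avg:
  assumes k: "k \<in> {1..K}"
  shows "(1 / real_of_int (nk k)) * sum rho {idx k..<idx (Suc k)} = lam"
proof -
  have k1: "(1::nat) \<in> {1..K}" using K1 by simp
  define T where "T i = (if idx 1 \<le> i \<and> i < idx (Suc 1) then 1 / real_of_int (nk 1) else 0)
     - (if idx k \<le> i \<and> i < idx (Suc k) then 1 / real_of_int (nk k) else 0)" for i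
  have s1: "(\<Sum>i\<in>{1..<int N+1}. if idx k \<le> i \<and> i < idx (Suc k) then 1 / real_of_int (nk k) else 0) = 1"
    if "k \<in> {1..K}" for k
    using sum_ind_elem[OF that, of "\<lambda>_. 1 / real_of_int (nk k)"] sum_one_elem[OF that] nk_pos[OF that]
    by simp
  have T0: "(\<Sum>i\<in>{1..<int N+1}. T i) = 0"
    unfolding T_def using s1[OF k] s1[OF k1] by (simp add: sum_subtractf)
  have Tc: "\<forall>k'\<in>{1..K}. \<forall>i. idx k' \<le> i \<and> i < idx (Suc k') \<longrightarrow> T i = T (idx k')"
  proof (intro ballI allI impI)
    fix k' i assume k': "k' \<in> {1..K}" and i: "idx k' \<le> i \<and> i < idx (Suc k')"
    have i0: "idx k' \<le> idx k'" "idx k' < idx (Suc k')" using idx_inc[OF k'] by auto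
    show "T i = T (idx k')" unfolding T_def
      using ind_elem[OF k1 k'] ind_elem[OF k k'] i i0 by (simp only:)
  qed
  obtain v where v: "UH_mean0 N K idx v" "\<forall>i\<in>{1..<int N+1}. v (i+1) - v i = T i"
    using testfun[OF T0 Tc] by blast
  have "0 = (\<Sum>i\<in>{1..<int N+1}. rho i * (v (i+1) - v i))" using orth[OF v(1)] by simp
  also have "\<dots> = (\<Sum>i\<in>{1..<int N+1}. rho i * T i)" using v(2) by (intro sum.cong) auto
  also have "\<dots> = (\<Sum>i\<in>{1..<int N+1}. if idx 1 \<le> i \<and> i < idx (Suc 1) then rho i / real_of_int (nk 1) else 0)
      - (\<Sum>i\<in>{1..<int N+1}. if idx k \<le> i \<and> i < idx (Suc k) then rho i / real_of_int (nk k) else 0)"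
    unfolding T_def sum_subtractf[symmetric] by (intro sum.cong) (auto simp: right_diff_distrib)
  also have "\<dots> = (\<Sum>i\<in>{idx 1..<idx (Suc 1)}. rho i / real_of_int (nk 1)) - (\<Sum>i\<in>{idx k..<idx (Suc k)}. rho i / real_of_int (nk k))"
    using sum_ind_elem[OF k1, of "\<lambda>i. rho i / real_of_int (nk 1)"] sum_ind_elem[OF k, of "\<lambda>i. rho i / real_of_int (nk k)"]
    by simp
  finally show ?thesis unfolding lam_def by (simp add: sum_divide_distrib)
qed

definition Mk :: "nat \<Rightarrow> real" where
  "Mk k = (1 / real_of_int (nk k)) * (\<Sum>i\<in>{idx k..<idx (Suc k)}. psi0 p psi i)"
definition sbar :: "nat \<Rightarrow> real" where
  "sbar k = (1 / real_of_int (nk k)) * (\<Sum>i\<in>{idx k..<idx (Suc k)}. sg i)"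

lemma gk_eq:
  assumes k: "k \<in> {1..K}"
  shows "gk k * Mk k - sbar k = lam"
proof -
  have "sum rho {idx k..<idx (Suc k)} = (\<Sum>i\<in>{idx k..<idx (Suc k)}. psi0 p psi i * gk k - sg i)"
    using Dt_const[OF k] by (intro sum.cong) (auto simp: rho_def)
  then have "sum rho {idx k..<idx (Suc k)} = gk k * (\<Sum>i\<in>{idx k..<idx (Suc k)}. psi0 p psi i) - (\<Sum>i\<in>{idx k..<idx (Suc k)}. sg i)"
    by (simp add: sum_subtractf sum_distrib_left mult.commute)
  then show ?thesis using rho_avg[OF k] nk_pos[OF k] unfolding Mk_def sbar_def by (simp add: field_simps)
qed


definition b0 :: "int \<Rightarrow> real" where "b0 i = (1 / real p) * (\<Sum>j\<in>{1..int p}. 1 / psi i j)"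

lemma psi0_b0: "psi0 p psi i = 1 / b0 i"
  by (simp add: psi0_def avgY_def b0_def)

lemma b0_bnd: "1 / C \<le> b0 i" "b0 i \<le> 1 / c"
proof -
  have cp: "card {1..int p} = p" by simp
  have l: "1 / C \<le> 1 / psi i j" "1 / psi i j \<le> 1 / c" for j
    using bnd cpos psi_pos[of i j] by (auto intro: divide_left_mono simp: frac_le)
  have "(\<Sum>j\<in>{1..int p}. 1 / C) \<le> (\<Sum>j\<in>{1..int p}. 1 / psi i j)" by (intro sum_mono l)
  then have "real p * (1/C) \<le> (\<Sum>j\<in>{1..int p}. 1 / psi i j)" using cp by simp
  then show "1 / C \<le> b0 i" using p1 unfolding b0_def by (simp add: field_simps)
  have "(\<Sum>j\<in>{1..int p}. 1 / psi i j) \<le> (\<Sum>j\<in>{1..int p}. 1 / c)" by (intro sum_mono l)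
  then have "(\<Sum>j\<in>{1..int p}. 1 / psi i j) \<le> real p * (1/c)" using cp by simp
  then show "b0 i \<le> 1 / c" using p1 unfolding b0_def by (simp add: field_simps)
qed

lemma b0_pos: "b0 i > 0" using b0_bnd(1)[of i] Cpos by (meson less_le_trans zero_less_divide_1_iff)

lemma psi0_bnd: "c \<le> psi0 p psi i" "psi0 p psi i \<le> C"
proof -
  have "1 / (1/c) \<le> 1 / b0 i" using b0_bnd(2)[of i] b0_pos[of i] cpos by (intro divide_left_mono) (auto simp: mult_pos_pos)
  then show "c \<le> psi0 p psi i" by (simp add: psi0_b0)
  have "1 / b0 i \<le> 1 / (1/C)" using b0_bnd(1) b0_pos Cpos by (intro divide_left_mono) auto
  then show "psi0 p psi i \<le> C" by (simp add: psi0_b0)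
qed

lemma b0_psi0: "b0 i = 1 / psi0 p psi i" using b0_pos[of i] by (simp add: psi0_b0)

lemma bb_bnd: "1 / C \<le> bb i" "bb i \<le> 1 / c"
  using bnd cpos psi_pos[of i i] by (auto intro: divide_left_mono simp: bb_def frac_le)

lemma psi_lip: "\<bar>psi i j - psi l j\<bar> \<le> eps N * C' * \<bar>real_of_int (i - l)\<bar>"
proof -
  have up: "\<bar>psi i j - psi l j\<bar> \<le> eps N * C' * real_of_int (i - l)" if "l \<le> i" for i l
    using that
  proof (induction i rule: int_ge_induct)
    case base then show ?case by simp
  next
    case (step m)
    have "\<bar>psi (m+1) j - psi l j\<bar> \<le> \<bar>psi (m+1) j - psi m j\<bar> + \<bar>psi m j - psi l j\<bar>" by linarith
    also have "\<dots> \<le> eps N * C' + eps N * C' * real_of_int (m - l)" using lip step by (meson add_mono)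
    finally show ?case by (simp add: algebra_simps)
  qed
  show ?thesis
  proof (cases "l \<le> i")
    case True then show ?thesis using up[of l i] by simp
  next
    case False then show ?thesis using up[of i l] by (simp add: abs_minus_commute)
  qed
qed

definition Lb :: real where "Lb = C' / c\<^sup>2"
definition L0 :: real where "L0 = C\<^sup>2 * C' / c\<^sup>2"

lemma Lb_nn: "Lb \<ge> 0" using C'nn by (simp add: Lb_def)
lemma L0_nn: "L0 \<ge> 0" using C'nn by (simp add: L0_def)

lemma inv_psi_lip: "\<bar>1 / psi i j - 1 / psi l j\<bar> \<le> Lb * eps N * \<bar>real_of_int (i - l)\<bar>"
proof -
  have "\<bar>1 / psi i j - 1 / psi l j\<bar> \<le> \<bar>psi i j - psi l j\<bar> / c\<^sup>2"
    using bnd cpos by (intro inv_diff_le) auto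
  also have "\<dots> \<le> eps N * C' * \<bar>real_of_int (i - l)\<bar> / c\<^sup>2"
    using psi_lip by (intro divide_right_mono) auto
  finally show ?thesis by (simp add: Lb_def mult.commute)
qed

lemma b0_lip: "\<bar>b0 i - b0 l\<bar> \<le> Lb * eps N * \<bar>real_of_int (i - l)\<bar>"
proof -
  have "b0 i - b0 l = (1 / real p) * (\<Sum>j\<in>{1..int p}. 1 / psi i j - 1 / psi l j)"
    by (simp add: b0_def sum_subtractf right_diff_distrib)
  then have "\<bar>b0 i - b0 l\<bar> \<le> (1 / real p) * (\<Sum>j\<in>{1..int p}. \<bar>1 / psi i j - 1 / psi l j\<bar>)"
    using sum_abs[of "\<lambda>j. 1 / psi i j - 1 / psi l j" "{1..int p}"] by (simp add: abs_mult divide_right_mono)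
  also have "\<dots> \<le> (1 / real p) * (\<Sum>j\<in>{1..int p}. Lb * eps N * \<bar>real_of_int (i - l)\<bar>)"
    by (intro mult_left_mono sum_mono inv_psi_lip) auto
  also have "\<dots> = Lb * eps N * \<bar>real_of_int (i - l)\<bar>" using p1 by simp
  finally show ?thesis .
qed

lemma psi0_lip: "\<bar>psi0 p psi i - psi0 p psi l\<bar> \<le> L0 * eps N * \<bar>real_of_int (i - l)\<bar>"
proof -
  have "\<bar>psi0 p psi i - psi0 p psi l\<bar> = \<bar>1 / b0 i - 1 / b0 l\<bar>" by (simp add: psi0_b0)
  also have "\<dots> \<le> \<bar>b0 i - b0 l\<bar> / (1/C)\<^sup>2"
    using b0_bnd Cpos by (intro inv_diff_le) auto
  also have "\<dots> \<le> Lb * eps N * \<bar>real_of_int (i - l)\<bar> / (1/C)\<^sup>2"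
    using b0_lip by (intro divide_right_mono) auto
  also have "\<dots> = L0 * eps N * \<bar>real_of_int (i - l)\<bar>"
    using Cpos cpos by (simp add: Lb_def L0_def field_simps power2_eq_square)
  finally show ?thesis .
qed


definition dd :: "int \<Rightarrow> real" where "dd i = b0 i - bb i"
definition Dsum :: "int \<Rightarrow> real" where "Dsum x = (\<Sum>i\<in>{1..<x+1}. dd i)"
definition Bd :: real where "Bd = 2 * real p * C' / c\<^sup>2 + real p / c"

lemma dd_bnd: "\<bar>dd i\<bar> \<le> 1 / c"
proof -
  have "1/C \<ge> 0" using Cpos by simp
  then show ?thesis using b0_bnd[of i] bb_bnd[of i] unfolding dd_def by linarith
qed

lemma block:
  "\<bar>\<Sum>l\<in>{a..<a+int p}. dd l\<bar> \<le> 2 * real p * real p * eps N * C' / c\<^sup>2"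
proof -
  have pj: "per (int p) (\<lambda>j. 1 / psi a j)" using per_psi_j[of a] by (simp add: per_def)
  have "real p * b0 a = (\<Sum>j\<in>{1..<1+int p}. 1 / psi a j)"
    using p1 by (simp add: b0_def sum_cl_ivl add.commute)
  also have "\<dots> = (\<Sum>l\<in>{a..<a+int p}. 1 / psi a l)" using per_sum_shift[OF pj, of 1 a] by simp
  finally have pb0: "real p * b0 a = (\<Sum>l\<in>{a..<a+int p}. 1 / psi a l)" .
  have pb: "(\<Sum>l\<in>{a..<a+int p}. b0 a) = (\<Sum>l\<in>{a..<a+int p}. 1 / psi a l)" using pb0 by simp
  have "(\<Sum>l\<in>{a..<a+int p}. dd l) = (\<Sum>l\<in>{a..<a+int p}. b0 l - b0 a) + ((\<Sum>l\<in>{a..<a+int p}. b0 a) - (\<Sum>l\<in>{a..<a+int p}. bb l))"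
    by (simp add: dd_def sum_subtractf)
  also have "\<dots> = (\<Sum>l\<in>{a..<a+int p}. b0 l - b0 a) + (\<Sum>l\<in>{a..<a+int p}. 1 / psi a l - 1 / psi l l)"
    using pb0 by (simp add: sum_subtractf bb_def)
  finally have eq: "(\<Sum>l\<in>{a..<a+int p}. dd l) = \<dots>" .
  have t1: "\<bar>b0 l - b0 a\<bar> \<le> Lb * eps N * real p" if "l \<in> {a..<a+int p}" for l
  proof -
    have "\<bar>real_of_int (l - a)\<bar> \<le> real p" using that by auto
    then show ?thesis using b0_lip[of l a] Lb_nn epos
      by (meson mult_left_mono order_trans mult_nonneg_nonneg less_imp_le)
  qed
  have t2: "\<bar>1 / psi a l - 1 / psi l l\<bar> \<le> Lb * eps N * real p" if "l \<in> {a..<a+int p}" for l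
  proof -
    have "\<bar>real_of_int (a - l)\<bar> \<le> real p" using that by auto
    then show ?thesis using inv_psi_lip[of a l l] Lb_nn epos
      by (meson mult_left_mono order_trans mult_nonneg_nonneg less_imp_le)
  qed
  have "\<bar>\<Sum>l\<in>{a..<a+int p}. dd l\<bar> \<le> (\<Sum>l\<in>{a..<a+int p}. \<bar>b0 l - b0 a\<bar>) + (\<Sum>l\<in>{a..<a+int p}. \<bar>1 / psi a l - 1 / psi l l\<bar>)"
    unfolding eq by (rule order_trans[OF abs_triangle_ineq add_mono[OF sum_abs sum_abs]])
  also have "\<dots> \<le> (\<Sum>l\<in>{a..<a+int p}. Lb * eps N * real p) + (\<Sum>l\<in>{a..<a+int p}. Lb * eps N * real p)"
    by (intro add_mono sum_mono t1 t2)
  also have "\<dots> = 2 * real p * real p * eps N * C' / c\<^sup>2" by (simp add: Lb_def)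
  finally show ?thesis .
qed

lemma Dsum_bnd:
  assumes "0 \<le> x"
  shows "\<bar>Dsum x\<bar> \<le> real_of_int x * (2 * real p * eps N * C' / c\<^sup>2) + real p / c"
proof -
  have "\<forall>x. nat x = n \<longrightarrow> 0 \<le> x \<longrightarrow> \<bar>Dsum x\<bar> \<le> real_of_int x * (2 * real p * eps N * C' / c\<^sup>2) + real p / c" for n
  proof (induction n rule: less_induct)
    case (less n)
    show ?case
    proof (intro allI impI)
      fix x assume xn: "nat x = n" and x0: "0 \<le> x"
      have cst: "0 \<le> 2 * real p * eps N * C' / c\<^sup>2" using epos C'nn by simp
      show "\<bar>Dsum x\<bar> \<le> real_of_int x * (2 * real p * eps N * C' / c\<^sup>2) + real p / c"
      proof (cases "x < int p")
        case True
        have "\<bar>Dsum x\<bar> \<le> (\<Sum>i\<in>{1..<x+1}. \<bar>dd i\<bar>)" unfolding Dsum_def by (rule sum_abs)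
        also have "\<dots> \<le> (\<Sum>i\<in>{1..<x+1}. 1 / c)" by (intro sum_mono dd_bnd)
        also have "\<dots> = real_of_int x / c" using x0 by simp
        also have "\<dots> \<le> real p / c" using True cpos by (simp add: divide_right_mono)
        finally show ?thesis using cst x0 by (smt (verit) mult_nonneg_nonneg of_int_nonneg)
      next
        case False
        have IH: "\<bar>Dsum (x - int p)\<bar> \<le> real_of_int (x - int p) * (2 * real p * eps N * C' / c\<^sup>2) + real p / c"
        proof -
          have lt: "nat (x - int p) < n" using xn p1 False by auto
          show ?thesis using less.IH[OF lt, rule_format, of "x - int p"] False by simp
        qed
        have "Dsum x = Dsum (x - int p) + (\<Sum>l\<in>{(x - int p + 1)..<(x - int p + 1) + int p}. dd l)"
          unfolding Dsum_def using False p1 by (simp add: sum_ivl_split[of 1 "x - int p + 1" "x+1"])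
        then have "\<bar>Dsum x\<bar> \<le> \<bar>Dsum (x - int p)\<bar> + 2 * real p * real p * eps N * C' / c\<^sup>2"
          using block[of "x - int p + 1"] by linarith
        also have "\<dots> \<le> real_of_int (x - int p) * (2 * real p * eps N * C' / c\<^sup>2) + real p / c + 2 * real p * real p * eps N * C' / c\<^sup>2"
          using IH by linarith
        also have "\<dots> = real_of_int x * (2 * real p * eps N * C' / c\<^sup>2) + real p / c"
          using cpos by (simp add: field_simps)
        finally show ?thesis .
      qed
    qed
  qed
  then show ?thesis using assms by blast
qed

lemma Bd_nn: "Bd \<ge> 0" using C'nn cpos by (simp add: Bd_def)

lemma Dsum_Bd:
  assumes "0 \<le> x" "x \<le> int N"
  shows "\<bar>Dsum x\<bar> \<le> Bd"
proof -
  have cst: "0 \<le> 2 * real p * eps N * C' / c\<^sup>2" using epos C'nn by simp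
  have "real_of_int x * (2 * real p * eps N * C' / c\<^sup>2) \<le> real N * (2 * real p * eps N * C' / c\<^sup>2)"
    using assms cst by (intro mult_right_mono) auto
  also have "\<dots> = 2 * real p * C' / c\<^sup>2" using eN by (simp add: field_simps)
  finally show ?thesis using Dsum_bnd[OF assms(1)] by (simp add: Bd_def)
qed

lemma abel:
  assumes "0 \<le> m"
  shows "(\<Sum>i\<in>{1..<m+1}. sg i * dd i) = sg m * Dsum m - (\<Sum>i\<in>{1..<m}. (sg (i+1) - sg i) * Dsum i)"
  using assms
proof (induction m rule: int_ge_induct)
  case base then show ?case by (simp add: Dsum_def)
next
  case (step m)
  have D1: "Dsum (m+1) = Dsum m + dd (m+1)" unfolding Dsum_def using step(1) sum_ivl_last[of 1 "m+1" dd] by simp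
  have "(\<Sum>i\<in>{1..<m+1+1}. sg i * dd i) = (\<Sum>i\<in>{1..<m+1}. sg i * dd i) + sg (m+1) * dd (m+1)"
    using step(1) sum_ivl_last[of 1 "m+1" "\<lambda>i. sg i * dd i"] by simp
  moreover have "(\<Sum>i\<in>{1..<m+1}. (sg (i+1) - sg i) * Dsum i) = (\<Sum>i\<in>{1..<m}. (sg (i+1) - sg i) * Dsum i) + (sg (m+1) - sg m) * Dsum m"
    using step(1) sum_ivl_last[of 1 m "\<lambda>i. (sg (i+1) - sg i) * Dsum i"] by (cases "m = 0") (auto simp: Dsum_def)
  ultimately show ?case using step(2) D1 by (simp add: algebra_simps)
qed

definition Ct :: "int \<Rightarrow> real" where "Ct j = eps N * (\<Sum>i\<in>{1..<j}. sg i * dd i)"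

lemma Lf_nn: "Lf \<ge> 0" using epos by (simp add: Lf_def sum_nonneg)

lemma Ct_bnd:
  assumes "1 \<le> j" "j \<le> int N + 1"
  shows "\<bar>Ct j\<bar> \<le> 2 * eps N * Lf * Bd"
proof -
  define m where "m = j - 1"
  have m: "0 \<le> m" "m \<le> int N" "j = m + 1" using assms by (auto simp: m_def)
  have "\<bar>\<Sum>i\<in>{1..<m+1}. sg i * dd i\<bar> \<le> \<bar>sg m * Dsum m\<bar> + \<bar>\<Sum>i\<in>{1..<m}. (sg (i+1) - sg i) * Dsum i\<bar>"
    unfolding abel[OF m(1)] by (rule abs_triangle_ineq4)
  also have "\<dots> \<le> Lf * Bd + (\<Sum>i\<in>{1..<m}. eps N * \<bar>f (i+1)\<bar> * Bd)"
  proof (rule add_mono)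
    show "\<bar>sg m * Dsum m\<bar> \<le> Lf * Bd" unfolding abs_mult
      using sg_bound Dsum_Bd[OF m(1,2)] Lf_nn by (intro mult_mono) auto
    have "\<bar>\<Sum>i\<in>{1..<m}. (sg (i+1) - sg i) * Dsum i\<bar> \<le> (\<Sum>i\<in>{1..<m}. \<bar>(sg (i+1) - sg i) * Dsum i\<bar>)"
      by (rule sum_abs)
    also have "\<dots> \<le> (\<Sum>i\<in>{1..<m}. eps N * \<bar>f (i+1)\<bar> * Bd)"
    proof (rule sum_mono)
      fix i assume i: "i \<in> {1..<m}"
      have "\<bar>sg (i+1) - sg i\<bar> = eps N * \<bar>f (i+1)\<bar>" using sg_rec[of i] epos by (simp add: abs_mult)
      moreover have "\<bar>Dsum i\<bar> \<le> Bd" using i m by (intro Dsum_Bd) auto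
      ultimately show "\<bar>(sg (i+1) - sg i) * Dsum i\<bar> \<le> eps N * \<bar>f (i+1)\<bar> * Bd"
      proof -
        have "\<bar>(sg (i+1) - sg i) * Dsum i\<bar> = (eps N * \<bar>f (i+1)\<bar>) * \<bar>Dsum i\<bar>"
          unfolding abs_mult using \<open>\<bar>sg (i+1) - sg i\<bar> = eps N * \<bar>f (i+1)\<bar>\<close> by simp
        also have "\<dots> \<le> (eps N * \<bar>f (i+1)\<bar>) * Bd"
          using \<open>\<bar>Dsum i\<bar> \<le> Bd\<close> epos by (intro mult_left_mono) auto
        finally show ?thesis .
      qed
    qed
    finally show "\<bar>\<Sum>i\<in>{1..<m}. (sg (i+1) - sg i) * Dsum i\<bar> \<le> (\<Sum>i\<in>{1..<m}. eps N * \<bar>f (i+1)\<bar> * Bd)" .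
  qed
  also have "(\<Sum>i\<in>{1..<m}. eps N * \<bar>f (i+1)\<bar> * Bd) \<le> Lf * Bd"
  proof -
    have "(\<Sum>i\<in>{1..<m}. eps N * \<bar>f (i+1)\<bar> * Bd) = eps N * Bd * (\<Sum>i\<in>{1..<m}. \<bar>f (i+1)\<bar>)"
      by (simp add: sum_distrib_left algebra_simps)
    also have "(\<Sum>i\<in>{1..<m}. \<bar>f (i+1)\<bar>) \<le> (\<Sum>i\<in>{1..<int N+1}. \<bar>f i\<bar>)"
    proof (cases "1 \<le> m")
      case True
      then have "(\<Sum>i\<in>{1..<m}. \<bar>f (i+1)\<bar>) = (\<Sum>i\<in>{1+1..<m+1}. \<bar>f i\<bar>)"
        using sum_shift1[of 1 m "\<lambda>i. \<bar>f i\<bar>"] by simp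
      also have "\<dots> \<le> (\<Sum>i\<in>{1..<int N+1}. \<bar>f i\<bar>)" using m by (intro sum_abs_mono_ivl) auto
      finally show ?thesis .
    next
      case False then show ?thesis by (simp add: sum_nonneg)
    qed
    then have "eps N * Bd * (\<Sum>i\<in>{1..<m}. \<bar>f (i+1)\<bar>) \<le> eps N * Bd * (\<Sum>i\<in>{1..<int N+1}. \<bar>f i\<bar>)"
      using epos Bd_nn by (intro mult_left_mono) auto
    finally show ?thesis by (simp add: Lf_def algebra_simps)
  qed
  finally have "\<bar>\<Sum>i\<in>{1..<m+1}. sg i * dd i\<bar> \<le> 2 * Lf * Bd" by simp
  then have "eps N * \<bar>\<Sum>i\<in>{1..<m+1}. sg i * dd i\<bar> \<le> eps N * (2 * Lf * Bd)" using epos by (intro mult_left_mono) auto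
  then show ?thesis unfolding Ct_def using m(3) epos by (simp add: abs_mult algebra_simps)
qed


definition Vk :: "nat \<Rightarrow> real" where "Vk k = eps N * (\<Sum>i\<in>{idx k..<idx (Suc k)}. \<bar>f i\<bar>)"
definition PA :: "nat \<Rightarrow> int \<Rightarrow> real" where "PA k i = sbar k * (1 / Mk k - b0 i)"
definition PB :: "nat \<Rightarrow> int \<Rightarrow> real" where "PB k i = (sbar k - sg i) * b0 i"

lemma avg_bound:
  fixes g :: "int \<Rightarrow> real"
  assumes k: "k \<in> {1..K}" and b: "\<And>l. idx k \<le> l \<Longrightarrow> l < idx (Suc k) \<Longrightarrow> lo \<le> g l \<and> g l \<le> hi"
  shows "lo \<le> (1 / real_of_int (nk k)) * (\<Sum>l\<in>{idx k..<idx (Suc k)}. g l)"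
    "(1 / real_of_int (nk k)) * (\<Sum>l\<in>{idx k..<idx (Suc k)}. g l) \<le> hi"
proof -
  have n: "real_of_int (nk k) > 0" using nk_pos[OF k] by simp
  have cs: "(\<Sum>l\<in>{idx k..<idx (Suc k)}. x) = real_of_int (nk k) * x" for x :: real
    using nk_pos[OF k] by (simp add: nk_def)
  have "(\<Sum>l\<in>{idx k..<idx (Suc k)}. lo) \<le> (\<Sum>l\<in>{idx k..<idx (Suc k)}. g l)" using b by (intro sum_mono) auto
  then show "lo \<le> (1 / real_of_int (nk k)) * (\<Sum>l\<in>{idx k..<idx (Suc k)}. g l)"
    using n unfolding cs by (simp add: field_simps)
  have "(\<Sum>l\<in>{idx k..<idx (Suc k)}. g l) \<le> (\<Sum>l\<in>{idx k..<idx (Suc k)}. hi)" using b by (intro sum_mono) auto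
  then show "(1 / real_of_int (nk k)) * (\<Sum>l\<in>{idx k..<idx (Suc k)}. g l) \<le> hi"
    using n unfolding cs by (simp add: field_simps)
qed

lemma dist_in_elem:
  assumes "idx k \<le> i" "i < idx (Suc k)" "idx k \<le> l" "l < idx (Suc k)"
  shows "eps N * \<bar>real_of_int (i - l)\<bar> \<le> Hk N idx k"
proof -
  have "\<bar>real_of_int (i - l)\<bar> \<le> real_of_int (nk k)" using assms by (simp add: nk_def)
  then show ?thesis using epos by (simp add: Hk_eq)
qed

lemma psi0_elem:
  assumes "idx k \<le> i" "i < idx (Suc k)" "idx k \<le> l" "l < idx (Suc k)"
  shows "\<bar>psi0 p psi i - psi0 p psi l\<bar> \<le> L0 * Hk N idx k"
proof -
  have "\<bar>psi0 p psi i - psi0 p psi l\<bar> \<le> L0 * (eps N * \<bar>real_of_int (i - l)\<bar>)"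
    using psi0_lip[of i l] by (simp add: mult.assoc)
  also have "\<dots> \<le> L0 * Hk N idx k" using dist_in_elem[OF assms] L0_nn by (intro mult_left_mono)
  finally show ?thesis .
qed

lemma Mk_bnd:
  assumes k: "k \<in> {1..K}"
  shows "c \<le> Mk k" "Mk k \<le> C"
  using avg_bound[OF k, of c "psi0 p psi" C] psi0_bnd unfolding Mk_def by auto

lemma Mk_near:
  assumes k: "k \<in> {1..K}" and i: "idx k \<le> i" "i < idx (Suc k)"
  shows "\<bar>Mk k - psi0 p psi i\<bar> \<le> L0 * Hk N idx k"
proof -
  have b: "psi0 p psi i - L0 * Hk N idx k \<le> psi0 p psi l \<and> psi0 p psi l \<le> psi0 p psi i + L0 * Hk N idx k"
    if "idx k \<le> l" "l < idx (Suc k)" for l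
    using psi0_elem[OF i that] by (smt (verit))
  from avg_bound[where g="psi0 p psi", OF k b] show ?thesis unfolding Mk_def by linarith
qed

lemma sg_elem:
  assumes "idx k \<le> i" "i < idx (Suc k)" "idx k \<le> l" "l < idx (Suc k)"
  shows "\<bar>sg i - sg l\<bar> \<le> Vk k"
proof -
  have gen: "\<bar>sg y - sg x\<bar> \<le> Vk k" if "idx k \<le> x" "x \<le> y" "y < idx (Suc k)" for x y
  proof -
    have "\<bar>sg y - sg x\<bar> \<le> eps N * (\<Sum>i\<in>{x+1..<y+1}. \<bar>f i\<bar>)" using sg_var that by simp
    also have "\<dots> \<le> Vk k" unfolding Vk_def
      using sum_abs_mono_ivl[of "idx k" "x+1" "y+1" "idx (Suc k)" f] that epos
      by (intro mult_left_mono) auto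
    finally show ?thesis .
  qed
  show ?thesis
  proof (cases "i \<le> l")
    case True then show ?thesis using gen[of i l] assms by (simp add: abs_minus_commute)
  next
    case False then show ?thesis using gen[of l i] assms by simp
  qed
qed

lemma sbar_near:
  assumes k: "k \<in> {1..K}" and i: "idx k \<le> i" "i < idx (Suc k)"
  shows "\<bar>sbar k - sg i\<bar> \<le> Vk k"
proof -
  have b: "sg i - Vk k \<le> sg l \<and> sg l \<le> sg i + Vk k" if "idx k \<le> l" "l < idx (Suc k)" for l
    using sg_elem[OF i that] by (smt (verit))
  from avg_bound[where g=sg, OF k b] show ?thesis unfolding sbar_def by linarith
qed

lemma sbar_bnd:
  assumes k: "k \<in> {1..K}"
  shows "\<bar>sbar k\<bar> \<le> Lf"
proof -
  have b: "- Lf \<le> sg l \<and> sg l \<le> Lf" if "idx k \<le> l" "l < idx (Suc k)" for l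
    using sg_bound[of l] by (smt (verit))
  from avg_bound[where g=sg, OF k b] show ?thesis unfolding sbar_def by linarith
qed

lemma Vk_nn: "Vk k \<ge> 0" using epos by (simp add: Vk_def sum_nonneg)

lemma A_part:
  assumes k: "k \<in> {1..K}" and m: "idx k \<le> m" "m \<le> idx (Suc k)"
  shows "\<bar>eps N * (\<Sum>i\<in>{idx k..<m}. PA k i)\<bar> \<le> Lf * L0 * (Hk N idx k)\<^sup>2 / c\<^sup>2"
proof -
  have t: "\<bar>PA k i\<bar> \<le> Lf * (L0 * Hk N idx k / c\<^sup>2)" if "i \<in> {idx k..<m}" for i
  proof -
    have i: "idx k \<le> i" "i < idx (Suc k)" using that m by auto
    have "\<bar>1 / Mk k - b0 i\<bar> = \<bar>1 / Mk k - 1 / psi0 p psi i\<bar>" by (simp add: b0_psi0)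
    also have "\<dots> \<le> \<bar>Mk k - psi0 p psi i\<bar> / c\<^sup>2" using Mk_bnd[OF k] psi0_bnd cpos by (intro inv_diff_le) auto
    also have "\<dots> \<le> L0 * Hk N idx k / c\<^sup>2" using Mk_near[OF k i] by (intro divide_right_mono) auto
    finally have "\<bar>1 / Mk k - b0 i\<bar> \<le> L0 * Hk N idx k / c\<^sup>2" .
    then show ?thesis unfolding PA_def abs_mult using sbar_bnd[OF k] by (intro mult_mono) auto
  qed
  have "\<bar>\<Sum>i\<in>{idx k..<m}. PA k i\<bar> \<le> (\<Sum>i\<in>{idx k..<m}. Lf * (L0 * Hk N idx k / c\<^sup>2))"
    by (rule order_trans[OF sum_abs sum_mono[OF t]])
  also have "\<dots> = real_of_int (m - idx k) * (Lf * (L0 * Hk N idx k / c\<^sup>2))" using m by simp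
  finally have s: "\<bar>\<Sum>i\<in>{idx k..<m}. PA k i\<bar> \<le> real_of_int (m - idx k) * (Lf * (L0 * Hk N idx k / c\<^sup>2))" .
  have em: "eps N * real_of_int (m - idx k) \<le> Hk N idx k" using m epos by (simp add: Hk_eq nk_def)
  have nn: "0 \<le> Lf * (L0 * Hk N idx k / c\<^sup>2)" using Lf_nn L0_nn Hk_pos[OF k] by simp
  have "\<bar>eps N * (\<Sum>i\<in>{idx k..<m}. PA k i)\<bar> \<le> eps N * (real_of_int (m - idx k) * (Lf * (L0 * Hk N idx k / c\<^sup>2)))"
    unfolding abs_mult abs_of_pos[OF epos] using s epos by (intro mult_left_mono) auto
  also have "\<dots> \<le> Hk N idx k * (Lf * (L0 * Hk N idx k / c\<^sup>2))"
    using em nn by (metis mult.assoc mult_right_mono)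
  also have "\<dots> = Lf * L0 * (Hk N idx k)\<^sup>2 / c\<^sup>2" by (simp add: power2_eq_square)
  finally show ?thesis .
qed


lemma sum_const_elem:
  assumes k: "k \<in> {1..K}"
  shows "(\<Sum>l\<in>{idx k..<idx (Suc k)}. x) = real_of_int (nk k) * x"
  using nk_pos[OF k] by (simp add: nk_def)

lemma eps_nk: "eps N * real_of_int (nk k) = Hk N idx k" by (simp add: Hk_eq)

lemma A_full:
  assumes k: "k \<in> {1..K}"
  shows "\<bar>eps N * (\<Sum>i\<in>{idx k..<idx (Suc k)}. PA k i)\<bar> \<le> Lf * L0\<^sup>2 * (Hk N idx k)^3 / c^3"
proof -
  let ?S = "{idx k..<idx (Suc k)}"
  let ?M = "Mk k" and ?H = "Hk N idx k"
  have Mp: "?M > 0" using Mk_bnd[OF k] cpos by linarith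
  have n: "real_of_int (nk k) > 0" using nk_pos[OF k] by simp
  have pw: "b0 i - 1 / ?M = (?M - psi0 p psi i) / ?M\<^sup>2 + (?M - psi0 p psi i)\<^sup>2 / (psi0 p psi i * ?M\<^sup>2)" for i
  proof -
    have pp: "psi0 p psi i > 0" using psi0_bnd(1)[of i] cpos by linarith
    show ?thesis unfolding b0_psi0 using pp Mp by (simp add: field_simps power2_eq_square)
  qed
  have s0: "(\<Sum>i\<in>?S. (?M - psi0 p psi i) / ?M\<^sup>2) = 0"
  proof -
    have "(\<Sum>i\<in>?S. (?M - psi0 p psi i) / ?M\<^sup>2) = ((\<Sum>i\<in>?S. ?M) - (\<Sum>i\<in>?S. psi0 p psi i)) / ?M\<^sup>2"
      by (simp only: sum_subtractf[symmetric] sum_divide_distrib)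
    also have "(\<Sum>i\<in>?S. ?M) = (\<Sum>i\<in>?S. psi0 p psi i)"
      unfolding sum_const_elem[OF k] using n by (simp add: Mk_def)
    finally show ?thesis by simp
  qed
  have tb: "0 \<le> (?M - psi0 p psi i)\<^sup>2 / (psi0 p psi i * ?M\<^sup>2) \<and> (?M - psi0 p psi i)\<^sup>2 / (psi0 p psi i * ?M\<^sup>2) \<le> (L0 * ?H)\<^sup>2 / c^3"
    if i: "i \<in> ?S" for i
  proof -
    have pp: "c \<le> psi0 p psi i" using psi0_bnd(1) .
    have den: "c^3 \<le> psi0 p psi i * ?M\<^sup>2"
    proof -
      have "c\<^sup>2 \<le> ?M\<^sup>2" using Mk_bnd[OF k] cpos by (simp add: power_mono)
      then have "c * c\<^sup>2 \<le> psi0 p psi i * ?M\<^sup>2" using pp cpos by (intro mult_mono) auto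
      then show ?thesis by (simp add: power3_eq_cube power2_eq_square)
    qed
    have num: "(?M - psi0 p psi i)\<^sup>2 \<le> (L0 * ?H)\<^sup>2"
    proof -
      have "\<bar>?M - psi0 p psi i\<bar> \<le> \<bar>L0 * ?H\<bar>" using Mk_near[OF k] i L0_nn Hk_pos[OF k] by auto
      then show ?thesis by (simp only: abs_le_square_iff)
    qed
    have c3: "c^3 > 0" using cpos by simp
    have "(?M - psi0 p psi i)\<^sup>2 / (psi0 p psi i * ?M\<^sup>2) \<le> (L0 * ?H)\<^sup>2 / (psi0 p psi i * ?M\<^sup>2)"
      using num den c3 by (intro divide_right_mono) linarith+
    also have "\<dots> \<le> (L0 * ?H)\<^sup>2 / c^3"
    proof (rule divide_left_mono)
      have "0 < psi0 p psi i * ?M\<^sup>2" using den c3 by linarith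
      then show "0 < psi0 p psi i * ?M\<^sup>2 * c ^ 3" using c3 by simp
    qed (use den in auto)
    moreover have "0 \<le> (?M - psi0 p psi i)\<^sup>2 / (psi0 p psi i * ?M\<^sup>2)"
    proof -
      have "0 < psi0 p psi i * ?M\<^sup>2" using den c3 by linarith
      then show ?thesis by simp
    qed
    ultimately show ?thesis by simp
  qed
  have "(\<Sum>i\<in>?S. b0 i - 1 / ?M) = (\<Sum>i\<in>?S. (?M - psi0 p psi i)\<^sup>2 / (psi0 p psi i * ?M\<^sup>2))"
    unfolding pw sum.distrib s0 by simp
  then have "\<bar>\<Sum>i\<in>?S. b0 i - 1 / ?M\<bar> \<le> (\<Sum>i\<in>?S. (L0 * ?H)\<^sup>2 / c^3)"
  proof -
    have "0 \<le> (\<Sum>i\<in>?S. (?M - psi0 p psi i)\<^sup>2 / (psi0 p psi i * ?M\<^sup>2))" using tb by (intro sum_nonneg) blast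
    moreover have "(\<Sum>i\<in>?S. (?M - psi0 p psi i)\<^sup>2 / (psi0 p psi i * ?M\<^sup>2)) \<le> (\<Sum>i\<in>?S. (L0 * ?H)\<^sup>2 / c^3)"
      using tb by (intro sum_mono) blast
    ultimately show ?thesis using \<open>(\<Sum>i\<in>?S. b0 i - 1 / ?M) = _\<close> by simp
  qed
  also have "\<dots> = real_of_int (nk k) * ((L0 * ?H)\<^sup>2 / c^3)" by (rule sum_const_elem[OF k])
  finally have sb: "\<bar>\<Sum>i\<in>?S. b0 i - 1 / ?M\<bar> \<le> real_of_int (nk k) * ((L0 * ?H)\<^sup>2 / c^3)" .
  have "(\<Sum>i\<in>?S. PA k i) = - sbar k * (\<Sum>i\<in>?S. b0 i - 1 / ?M)"
    by (simp add: PA_def sum_distrib_left sum_subtractf right_diff_distrib sum_negf)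
  then have "\<bar>eps N * (\<Sum>i\<in>?S. PA k i)\<bar> = eps N * (\<bar>sbar k\<bar> * \<bar>\<Sum>i\<in>?S. b0 i - 1 / ?M\<bar>)"
    using epos by (simp add: abs_mult)
  also have "\<dots> \<le> eps N * (Lf * (real_of_int (nk k) * ((L0 * ?H)\<^sup>2 / c^3)))"
    using sbar_bnd[OF k] sb epos by (intro mult_left_mono mult_mono) auto
  also have "\<dots> = Lf * L0\<^sup>2 * ?H^3 / c^3"
    using eps_nk[of k] by (simp add: field_simps power2_eq_square power3_eq_cube)
  finally show ?thesis .
qed

lemma B_part:
  assumes k: "k \<in> {1..K}" and m: "idx k \<le> m" "m \<le> idx (Suc k)"
  shows "\<bar>eps N * (\<Sum>i\<in>{idx k..<m}. PB k i)\<bar> \<le> Hk N idx k * Vk k / c"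
proof -
  have t: "\<bar>PB k i\<bar> \<le> Vk k * (1 / c)" if "i \<in> {idx k..<m}" for i
  proof -
    have i: "idx k \<le> i" "i < idx (Suc k)" using that m by auto
    have "\<bar>b0 i\<bar> \<le> 1 / c" using b0_bnd(2)[of i] b0_pos[of i] by simp
    then show ?thesis unfolding PB_def abs_mult using sbar_near[OF k i] by (intro mult_mono) auto
  qed
  have "\<bar>\<Sum>i\<in>{idx k..<m}. PB k i\<bar> \<le> (\<Sum>i\<in>{idx k..<m}. Vk k * (1 / c))"
    by (rule order_trans[OF sum_abs sum_mono[OF t]])
  also have "\<dots> = real_of_int (m - idx k) * (Vk k * (1 / c))" using m by simp
  finally have s: "\<bar>\<Sum>i\<in>{idx k..<m}. PB k i\<bar> \<le> real_of_int (m - idx k) * (Vk k * (1 / c))" .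
  have em: "eps N * real_of_int (m - idx k) \<le> Hk N idx k" using m epos by (simp add: Hk_eq nk_def)
  have nn: "0 \<le> Vk k * (1 / c)" using Vk_nn cpos by simp
  have "\<bar>eps N * (\<Sum>i\<in>{idx k..<m}. PB k i)\<bar> \<le> eps N * (real_of_int (m - idx k) * (Vk k * (1 / c)))"
    unfolding abs_mult abs_of_pos[OF epos] using s epos by (intro mult_left_mono) auto
  also have "\<dots> \<le> Hk N idx k * (Vk k * (1 / c))"
    using em nn by (metis mult.assoc mult_right_mono)
  also have "\<dots> = Hk N idx k * Vk k / c" by simp
  finally show ?thesis .
qed

lemma B_full:
  assumes k: "k \<in> {1..K}"
  shows "\<bar>eps N * (\<Sum>i\<in>{idx k..<idx (Suc k)}. PB k i)\<bar> \<le> Lb * (Hk N idx k)\<^sup>2 * Vk k"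
proof -
  let ?S = "{idx k..<idx (Suc k)}" and ?H = "Hk N idx k"
  have n: "real_of_int (nk k) > 0" using nk_pos[OF k] by simp
  have z: "(\<Sum>i\<in>?S. sbar k - sg i) = 0"
  proof -
    have "(\<Sum>i\<in>?S. sbar k - sg i) = real_of_int (nk k) * sbar k - (\<Sum>i\<in>?S. sg i)"
      by (simp only: sum_subtractf sum_const_elem[OF k])
    then show ?thesis using n by (simp add: sbar_def)
  qed
  have "(\<Sum>i\<in>?S. PB k i) = (\<Sum>i\<in>?S. (sbar k - sg i) * (b0 i - b0 (idx k)))"
  proof -
    have "(\<Sum>i\<in>?S. PB k i) = (\<Sum>i\<in>?S. (sbar k - sg i) * (b0 i - b0 (idx k)) + (sbar k - sg i) * b0 (idx k))"
      by (rule sum.cong) (simp_all add: PB_def algebra_simps)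
    also have "\<dots> = (\<Sum>i\<in>?S. (sbar k - sg i) * (b0 i - b0 (idx k))) + (\<Sum>i\<in>?S. sbar k - sg i) * b0 (idx k)"
      by (simp only: sum.distrib sum_distrib_right)
    finally have "(\<Sum>i\<in>?S. PB k i) = (\<Sum>i\<in>?S. (sbar k - sg i) * (b0 i - b0 (idx k))) + (\<Sum>i\<in>?S. sbar k - sg i) * b0 (idx k)" .
    then show ?thesis using z by simp
  qed
  also have "\<bar>\<dots>\<bar> \<le> (\<Sum>i\<in>?S. Vk k * (Lb * ?H))"
  proof (rule order_trans[OF sum_abs sum_mono])
    fix i assume "i \<in> ?S"
    then have i: "idx k \<le> i" "i < idx (Suc k)" by auto
    have "\<bar>b0 i - b0 (idx k)\<bar> \<le> Lb * (eps N * \<bar>real_of_int (i - idx k)\<bar>)" using b0_lip by (simp add: mult.assoc)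
    also have "\<dots> \<le> Lb * ?H" using dist_in_elem[OF i, of "idx k"] idx_inc[OF k] Lb_nn by (intro mult_left_mono) auto
    finally show "\<bar>(sbar k - sg i) * (b0 i - b0 (idx k))\<bar> \<le> Vk k * (Lb * ?H)"
      unfolding abs_mult using sbar_near[OF k i] by (intro mult_mono) auto
  qed
  also have "\<dots> = real_of_int (nk k) * (Vk k * (Lb * ?H))" by (rule sum_const_elem[OF k])
  finally have s: "\<bar>\<Sum>i\<in>?S. PB k i\<bar> \<le> real_of_int (nk k) * (Vk k * (Lb * ?H))" .
  have "\<bar>eps N * (\<Sum>i\<in>?S. PB k i)\<bar> \<le> eps N * (real_of_int (nk k) * (Vk k * (Lb * ?H)))"
    unfolding abs_mult abs_of_pos[OF epos] using s epos by (intro mult_left_mono) auto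
  also have "\<dots> = Lb * ?H\<^sup>2 * Vk k" using eps_nk[of k] by (simp add: field_simps power2_eq_square)
  finally show ?thesis .
qed


definition w :: "int \<Rightarrow> real" where "w i = utH i - u i"
definition FA :: "nat \<Rightarrow> real" where "FA k = eps N * (\<Sum>i\<in>{idx k..<idx (Suc k)}. PA k i)"
definition FB :: "nat \<Rightarrow> real" where "FB k = eps N * (\<Sum>i\<in>{idx k..<idx (Suc k)}. PB k i)"

lemma Mk_pos: "k \<in> {1..K} \<Longrightarrow> Mk k > 0" using Mk_bnd cpos by (meson less_le_trans)

lemma window:
  assumes k: "k \<in> {1..K}" and m: "idx k \<le> m" "m \<le> idx (Suc k)"
  shows "w m - w (idx k) = eps N * (\<Sum>i\<in>{idx k..<m}. PA k i) + eps N * (\<Sum>i\<in>{idx k..<m}. PB k i)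
     + (Ct m - Ct (idx k)) + lam * (eps N * real_of_int (m - idx k)) / Mk k"
proof -
  have Mp: "Mk k > 0" using Mk_pos[OF k] .
  have g: "gk k = (sbar k + lam) / Mk k" using gk_eq[OF k] Mp by (simp add: field_simps)
  have pt: "w (i+1) - w i = eps N * (PA k i + PB k i + sg i * dd i + lam / Mk k)" if i: "i \<in> {idx k..<m}" for i
  proof -
    have ii: "idx k \<le> i" "i < idx (Suc k)" using i m by auto
    have "w (i+1) - w i = eps N * (Dd N utH i - Dd N u i)" using epos by (simp add: w_def Dd_def field_simps)
    also have "Dd N utH i - Dd N u i = gk k - sg i * bb i" using Dt_const[OF k ii] Du_sg by simp
    also have "\<dots> = PA k i + PB k i + sg i * dd i + lam / Mk k"
      unfolding g PA_def PB_def dd_def using Mp by (simp add: field_simps)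
    finally show ?thesis .
  qed
  have "w m - w (idx k) = (\<Sum>i\<in>{idx k..<m}. w (i+1) - w i)" using sum_telescope_int[OF m(1), of w] by simp
  also have "\<dots> = (\<Sum>i\<in>{idx k..<m}. eps N * (PA k i + PB k i + sg i * dd i + lam / Mk k))"
    using pt by (rule sum.cong[OF refl])
  also have "\<dots> = eps N * (\<Sum>i\<in>{idx k..<m}. PA k i) + eps N * (\<Sum>i\<in>{idx k..<m}. PB k i)
     + eps N * (\<Sum>i\<in>{idx k..<m}. sg i * dd i) + eps N * (\<Sum>i\<in>{idx k..<m}. lam / Mk k)"
    by (simp only: sum.distrib sum_distrib_left[symmetric] distrib_left)
  also have "eps N * (\<Sum>i\<in>{idx k..<m}. sg i * dd i) = Ct m - Ct (idx k)"
  proof -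
    have "1 \<le> idx k" using idx_range[of k] k by auto
    then have "(\<Sum>i\<in>{1..<m}. sg i * dd i) = (\<Sum>i\<in>{1..<idx k}. sg i * dd i) + (\<Sum>i\<in>{idx k..<m}. sg i * dd i)"
      using m by (intro sum_ivl_split) auto
    then show ?thesis by (simp add: Ct_def algebra_simps)
  qed
  also have "eps N * (\<Sum>i\<in>{idx k..<m}. lam / Mk k) = lam * (eps N * real_of_int (m - idx k)) / Mk k"
    using m by simp
  finally show ?thesis .
qed

lemma Ct1: "Ct 1 = 0" by (simp add: Ct_def)

lemma node:
  assumes "1 \<le> k" "k \<le> K+1"
  shows "w (idx k) - w 1 = (\<Sum>k'\<in>{1..<k}. FA k' + FB k' + lam * Hk N idx k' / Mk k') + Ct (idx k)"
  using assms
proof (induction k rule: dec_induct)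
  case base then show ?case using idx1 Ct1 by simp
next
  case (step k)
  have k: "k \<in> {1..K}" using step by auto
  have "w (idx (Suc k)) - w (idx k) = FA k + FB k + (Ct (idx (Suc k)) - Ct (idx k)) + lam * Hk N idx k / Mk k"
  proof -
    have le: "idx k \<le> idx (Suc k)" using idx_inc[OF k] by simp
    have W: "w (idx (Suc k)) - w (idx k) = FA k + FB k + (Ct (idx (Suc k)) - Ct (idx k)) + lam * (eps N * real_of_int (idx (Suc k) - idx k)) / Mk k"
      using window[OF k le order.refl] unfolding FA_def FB_def .
    show ?thesis unfolding W by (simp add: Hk_def)
  qed
  then show ?case using step by simp
qed


definition R0 :: real where "R0 = (L0\<^sup>2 / c^3 + Lb) * (Hmax N K idx)\<^sup>2 * Lf"
definition Q0 :: real where "Q0 = 2 * eps N * Lf * Bd"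
definition Lam :: real where "Lam = (\<Sum>k\<in>{1..K}. Hk N idx k / Mk k)"

lemma sum_Vk: "(\<Sum>k\<in>{1..K}. Vk k) = Lf"
  unfolding Vk_def Lf_def by (simp add: sum_distrib_left[symmetric] sum_all)

lemma Hk_Hm: "k \<in> {1..K} \<Longrightarrow> 0 \<le> Hk N idx k \<and> Hk N idx k \<le> Hmax N K idx"
  using Hk_pos Hk_le by (meson less_imp_le)

lemma sumFAB: "(\<Sum>k\<in>{1..K}. \<bar>FA k\<bar> + \<bar>FB k\<bar>) \<le> R0"
proof -
  let ?Hm = "Hmax N K idx"
  have "(\<Sum>k\<in>{1..K}. \<bar>FA k\<bar> + \<bar>FB k\<bar>) \<le> (\<Sum>k\<in>{1..K}. Lf * L0\<^sup>2 * ?Hm\<^sup>2 / c^3 * Hk N idx k + Lb * ?Hm\<^sup>2 * Vk k)"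
  proof (rule sum_mono)
    fix k assume k: "k \<in> {1..K}"
    have H: "0 \<le> Hk N idx k" "Hk N idx k \<le> ?Hm" using Hk_Hm[OF k] by auto
    have H2: "(Hk N idx k)\<^sup>2 \<le> ?Hm\<^sup>2" using H by (simp add: power_mono)
    have "\<bar>FA k\<bar> \<le> Lf * L0\<^sup>2 * (Hk N idx k)^3 / c^3" using A_full[OF k] by (simp add: FA_def)
    also have "\<dots> \<le> Lf * L0\<^sup>2 * ?Hm\<^sup>2 / c^3 * Hk N idx k"
    proof -
      have "(Hk N idx k)^3 \<le> ?Hm\<^sup>2 * Hk N idx k"
        using mult_right_mono[OF H2 H(1)] by (simp add: power2_eq_square power3_eq_cube)
      then have "Lf * L0\<^sup>2 * (Hk N idx k)^3 \<le> Lf * L0\<^sup>2 * (?Hm\<^sup>2 * Hk N idx k)"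
        using Lf_nn by (intro mult_left_mono) auto
      then show ?thesis using cpos by (simp add: divide_right_mono mult.assoc mult.commute mult.left_commute)
    qed
    finally have a: "\<bar>FA k\<bar> \<le> Lf * L0\<^sup>2 * ?Hm\<^sup>2 / c^3 * Hk N idx k" .
    have "\<bar>FB k\<bar> \<le> Lb * (Hk N idx k)\<^sup>2 * Vk k" using B_full[OF k] by (simp add: FB_def)
    also have "\<dots> \<le> Lb * ?Hm\<^sup>2 * Vk k" using H2 Lb_nn Vk_nn by (intro mult_right_mono mult_left_mono) auto
    finally show "\<bar>FA k\<bar> + \<bar>FB k\<bar> \<le> Lf * L0\<^sup>2 * ?Hm\<^sup>2 / c^3 * Hk N idx k + Lb * ?Hm\<^sup>2 * Vk k"
      using a by simp
  qed
  also have "\<dots> = Lf * L0\<^sup>2 * ?Hm\<^sup>2 / c^3 * (\<Sum>k\<in>{1..K}. Hk N idx k) + Lb * ?Hm\<^sup>2 * (\<Sum>k\<in>{1..K}. Vk k)"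
    by (simp add: sum.distrib sum_distrib_left)
  also have "\<dots> = R0" unfolding sum_Hk sum_Vk R0_def by (simp add: algebra_simps)
  finally show ?thesis .
qed

lemma R0_nn: "R0 \<ge> 0" using Lf_nn Lb_nn cpos by (simp add: R0_def)
lemma Q0_nn: "Q0 \<ge> 0" using Lf_nn Bd_nn epos by (simp add: Q0_def)

lemma Lam_bnd: "1 / C \<le> Lam" "Lam \<le> 1 / c"
proof -
  have "(\<Sum>k\<in>{1..K}. Hk N idx k / C) \<le> Lam" unfolding Lam_def
  proof (rule sum_mono)
    fix k assume k: "k \<in> {1..K}"
    show "Hk N idx k / C \<le> Hk N idx k / Mk k"
      by (rule divide_left_mono) (use Mk_bnd[OF k] Hk_pos[OF k] Mk_pos[OF k] Cpos in auto)
  qed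
  then show "1 / C \<le> Lam" by (simp only: sum_divide_distrib[symmetric] sum_Hk)
  have "Lam \<le> (\<Sum>k\<in>{1..K}. Hk N idx k / c)" unfolding Lam_def
  proof (rule sum_mono)
    fix k assume k: "k \<in> {1..K}"
    show "Hk N idx k / Mk k \<le> Hk N idx k / c"
      by (rule divide_left_mono) (use Mk_bnd[OF k] Hk_pos[OF k] Mk_pos[OF k] cpos in auto)
  qed
  then show "Lam \<le> 1 / c" by (simp only: sum_divide_distrib[symmetric] sum_Hk)
qed

lemma lam_bnd: "\<bar>lam\<bar> \<le> C * (R0 + Q0)"
proof -
  have wp: "w (int N + 1) = w 1" using per_eq[OF uper, of "int N + 1" 1] per_eq[OF tper, of "int N + 1" 1]
    by (simp add: w_def)
  have "0 = (\<Sum>k'\<in>{1..<K+1}. FA k' + FB k' + lam * Hk N idx k' / Mk k') + Ct (int N + 1)"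
    using node[of "K+1"] K1 idxK wp by simp
  also have "{1..<K+1} = {1..K}" by auto
  finally have "0 = (\<Sum>k'\<in>{1..K}. FA k' + FB k') + lam * Lam + Ct (int N + 1)"
    unfolding Lam_def by (simp add: sum.distrib sum_distrib_left)
  then have "\<bar>lam\<bar> * Lam = \<bar>(\<Sum>k'\<in>{1..K}. FA k' + FB k') + Ct (int N + 1)\<bar>"
  proof -
    have Lp: "Lam > 0" using Lam_bnd(1) Cpos by (meson less_le_trans zero_less_divide_1_iff)
    assume e0: "0 = (\<Sum>k'\<in>{1..K}. FA k' + FB k') + lam * Lam + Ct (int N + 1)"
    have "\<bar>lam\<bar> * Lam = \<bar>lam * Lam\<bar>" using Lp by (simp add: abs_mult)
    also have "lam * Lam = - ((\<Sum>k'\<in>{1..K}. FA k' + FB k') + Ct (int N + 1))" using e0 by linarith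
    finally show ?thesis by simp
  qed
  also have "\<dots> \<le> (\<Sum>k'\<in>{1..K}. \<bar>FA k'\<bar> + \<bar>FB k'\<bar>) + \<bar>Ct (int N + 1)\<bar>"
    by (rule order_trans[OF abs_triangle_ineq add_mono[OF order_trans[OF sum_abs sum_mono[OF abs_triangle_ineq]] order.refl]])
  also have "\<dots> \<le> R0 + Q0" using sumFAB Ct_bnd[of "int N + 1"] Npos unfolding Q0_def by (intro add_mono) auto
  finally have a: "\<bar>lam\<bar> * Lam \<le> R0 + Q0" .
  have "\<bar>lam\<bar> * (1 / C) \<le> \<bar>lam\<bar> * Lam" using Lam_bnd by (intro mult_left_mono) auto
  then have "\<bar>lam\<bar> / C \<le> R0 + Q0" using a by simp
  then show ?thesis using Cpos by (simp add: field_simps)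
qed


definition alpha :: real where
  "alpha = R0 + (C / c) * (R0 + Q0) + Lf * L0 * (Hmax N K idx)\<^sup>2 / c\<^sup>2 + Q0"

lemma w_bound:
  assumes k: "k \<in> {1..K}" and j: "idx k \<le> j" "j < idx (Suc k)"
  shows "\<bar>w j - w 1\<bar> \<le> alpha + Hk N idx k * Vk k / c"
proof -
  let ?a = "idx k"
  have kK: "1 \<le> k" "k \<le> K+1" using k by auto
  have coef_def: "w j - w 1 = (\<Sum>k'\<in>{1..<k}. FA k' + FB k') + lam * ((\<Sum>k'\<in>{1..<k}. Hk N idx k' / Mk k') + eps N * real_of_int (j - ?a) / Mk k)
      + Ct j + eps N * (\<Sum>i\<in>{?a..<j}. PA k i) + eps N * (\<Sum>i\<in>{?a..<j}. PB k i)"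
  proof -
    have "w j - w 1 = (w ?a - w 1) + (w j - w ?a)" by simp
    also have "w ?a - w 1 = (\<Sum>k'\<in>{1..<k}. FA k' + FB k' + lam * Hk N idx k' / Mk k') + Ct ?a" by (rule node[OF kK])
    also have "w j - w ?a = eps N * (\<Sum>i\<in>{?a..<j}. PA k i) + eps N * (\<Sum>i\<in>{?a..<j}. PB k i)
     + (Ct j - Ct ?a) + lam * (eps N * real_of_int (j - ?a)) / Mk k" using window[OF k j(1)] j(2) by simp
    finally show ?thesis by (simp add: sum.distrib sum_distrib_left algebra_simps)
  qed
  define co where "co = (\<Sum>k'\<in>{1..<k}. Hk N idx k' / Mk k') + eps N * real_of_int (j - ?a) / Mk k"
  have co_bnd: "0 \<le> co \<and> co \<le> 1 / c"
  proof -
    have sub: "{1..<k} \<subseteq> {1..K}" using k by auto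
    have nnk: "0 \<le> Hk N idx k' / Mk k'" if "k' \<in> {1..K}" for k'
      using Hk_pos[OF that] Mk_pos[OF that] by simp
    have p1': "0 \<le> (\<Sum>k'\<in>{1..<k}. Hk N idx k' / Mk k')" using nnk sub by (intro sum_nonneg) auto
    have p2: "0 \<le> eps N * real_of_int (j - ?a) / Mk k" using epos j Mk_pos[OF k] by simp
    have p3: "eps N * real_of_int (j - ?a) / Mk k \<le> Hk N idx k / Mk k"
      using j epos Mk_pos[OF k] by (intro divide_right_mono) (auto simp: Hk_def)
    have "co \<le> (\<Sum>k'\<in>{1..<k}. Hk N idx k' / Mk k') + Hk N idx k / Mk k" unfolding co_def using p3 by simp
    also have "\<dots> = (\<Sum>k'\<in>{1..<Suc k}. Hk N idx k' / Mk k')" using k by simp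
    also have "\<dots> \<le> Lam" unfolding Lam_def using nnk k by (intro sum_mono2) auto
    finally show ?thesis using Lam_bnd(2) p1' p2 unfolding co_def by linarith
  qed
  have t1: "\<bar>\<Sum>k'\<in>{1..<k}. FA k' + FB k'\<bar> \<le> R0"
  proof -
    have "\<bar>\<Sum>k'\<in>{1..<k}. FA k' + FB k'\<bar> \<le> (\<Sum>k'\<in>{1..<k}. \<bar>FA k'\<bar> + \<bar>FB k'\<bar>)"
      by (rule order_trans[OF sum_abs sum_mono[OF abs_triangle_ineq]])
    also have "\<dots> \<le> (\<Sum>k'\<in>{1..K}. \<bar>FA k'\<bar> + \<bar>FB k'\<bar>)" using k by (intro sum_mono2) auto
    finally show ?thesis using sumFAB by linarith
  qed
  have t2: "\<bar>lam * co\<bar> \<le> (C / c) * (R0 + Q0)"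
  proof -
    have "\<bar>lam * co\<bar> = \<bar>lam\<bar> * co" using co_bnd by (simp add: abs_mult)
    also have "\<dots> \<le> (C * (R0 + Q0)) * (1 / c)" using lam_bnd co_bnd by (intro mult_mono) auto
    finally show ?thesis by simp
  qed
  have t3: "\<bar>Ct j\<bar> \<le> Q0" unfolding Q0_def
    using Ct_bnd[of j] elem_in[OF k j] by simp
  have t4: "\<bar>eps N * (\<Sum>i\<in>{?a..<j}. PA k i)\<bar> \<le> Lf * L0 * (Hmax N K idx)\<^sup>2 / c\<^sup>2"
  proof -
    have "(Hk N idx k)\<^sup>2 \<le> (Hmax N K idx)\<^sup>2" using Hk_Hm[OF k] by (simp add: power_mono)
    then have "Lf * L0 * (Hk N idx k)\<^sup>2 / c\<^sup>2 \<le> Lf * L0 * (Hmax N K idx)\<^sup>2 / c\<^sup>2"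
      using Lf_nn L0_nn by (intro divide_right_mono mult_left_mono) auto
    then show ?thesis using A_part[OF k j(1)] j(2) by linarith
  qed
  have t5: "\<bar>eps N * (\<Sum>i\<in>{?a..<j}. PB k i)\<bar> \<le> Hk N idx k * Vk k / c"
    using B_part[OF k j(1)] j(2) by simp
  have "\<bar>w j - w 1\<bar> \<le> \<bar>\<Sum>k'\<in>{1..<k}. FA k' + FB k'\<bar> + \<bar>lam * co\<bar> + \<bar>Ct j\<bar>
      + \<bar>eps N * (\<Sum>i\<in>{?a..<j}. PA k i)\<bar> + \<bar>eps N * (\<Sum>i\<in>{?a..<j}. PB k i)\<bar>"
    unfolding coef_def co_def[symmetric] by linarith
  also have "\<dots> \<le> alpha + Hk N idx k * Vk k / c"
    unfolding alpha_def using t1 t2 t3 t4 t5 by linarith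
  finally show ?thesis .
qed


lemma cs_ivl:
  fixes g :: "int \<Rightarrow> real"
  shows "(\<Sum>i\<in>A. \<bar>g i\<bar>)\<^sup>2 \<le> real (card A) * (\<Sum>i\<in>A. (g i)\<^sup>2)"
proof (cases "finite A")
  case True
  have "(\<Sum>i\<in>A. \<bar>g i\<bar>) = (\<Sum>i\<in>A. \<bar>(\<lambda>_. (1::real)) i\<bar> * \<bar>g i\<bar>)" by simp
  also have "\<dots> \<le> L2_set (\<lambda>_. (1::real)) A * L2_set g A" by (rule L2_set_mult_ineq)
  finally have a: "(\<Sum>i\<in>A. \<bar>g i\<bar>) \<le> L2_set (\<lambda>_. (1::real)) A * L2_set g A" .
  have nn: "0 \<le> (\<Sum>i\<in>A. \<bar>g i\<bar>)" by (simp add: sum_nonneg)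
  have "(\<Sum>i\<in>A. \<bar>g i\<bar>)\<^sup>2 \<le> (L2_set (\<lambda>_. (1::real)) A * L2_set g A)\<^sup>2"
    using a nn by (simp add: power_mono)
  also have "\<dots> = real (card A) * (\<Sum>i\<in>A. (g i)\<^sup>2)"
    unfolding L2_set_def power_mult_distrib by (simp add: sum_nonneg)
  finally show ?thesis .
next
  case False then show ?thesis by simp
qed

definition F2 :: real where "F2 = eps N * (\<Sum>i\<in>{1..<int N+1}. (f i)\<^sup>2)"

lemma F2_nn: "F2 \<ge> 0" using epos by (simp add: F2_def sum_nonneg)

lemma normX_f: "normX N f = sqrt F2"
  by (simp add: normX_def ipX_def F2_def eps_def sum_cl_ivl power2_eq_square)

lemma Lf_F2: "Lf\<^sup>2 \<le> F2"
proof -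
  have "Lf\<^sup>2 = (eps N)\<^sup>2 * (\<Sum>i\<in>{1..<int N+1}. \<bar>f i\<bar>)\<^sup>2" by (simp add: Lf_def power_mult_distrib)
  also have "\<dots> \<le> (eps N)\<^sup>2 * (real (card {1..<int N+1}) * (\<Sum>i\<in>{1..<int N+1}. (f i)\<^sup>2))"
    by (intro mult_left_mono cs_ivl) auto
  also have "\<dots> = F2" using eN by (simp add: F2_def power2_eq_square)
  finally show ?thesis .
qed

lemma Lf_nf: "Lf \<le> sqrt F2"
  using Lf_F2 Lf_nn by (metis real_le_rsqrt)

lemma Vk_sq:
  assumes k: "k \<in> {1..K}"
  shows "(Vk k)\<^sup>2 \<le> Hk N idx k * (eps N * (\<Sum>i\<in>{idx k..<idx (Suc k)}. (f i)\<^sup>2))"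
proof -
  have cd: "real (card {idx k..<idx (Suc k)}) = real_of_int (nk k)" using nk_pos[OF k] by (simp add: nk_def)
  have "(Vk k)\<^sup>2 = (eps N)\<^sup>2 * (\<Sum>i\<in>{idx k..<idx (Suc k)}. \<bar>f i\<bar>)\<^sup>2" by (simp add: Vk_def power_mult_distrib)
  also have "\<dots> \<le> (eps N)\<^sup>2 * (real (card {idx k..<idx (Suc k)}) * (\<Sum>i\<in>{idx k..<idx (Suc k)}. (f i)\<^sup>2))"
    by (intro mult_left_mono cs_ivl) auto
  also have "\<dots> = Hk N idx k * (eps N * (\<Sum>i\<in>{idx k..<idx (Suc k)}. (f i)\<^sup>2))"
    unfolding cd by (simp add: Hk_eq power2_eq_square)
  finally show ?thesis .
qed

lemma alpha_nn: "alpha \<ge> 0"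
  using R0_nn Q0_nn Lf_nn L0_nn cpos Cpos by (simp add: alpha_def)

lemma sum_w_sq: "eps N * (\<Sum>j\<in>{1..<int N+1}. (w j - w 1)\<^sup>2) \<le> 2 * alpha\<^sup>2 + 2 * (Hmax N K idx)^4 * F2 / c\<^sup>2"
proof -
  let ?Hm = "Hmax N K idx"
  have "eps N * (\<Sum>j\<in>{1..<int N+1}. (w j - w 1)\<^sup>2) = (\<Sum>k\<in>{1..K}. eps N * (\<Sum>j\<in>{idx k..<idx (Suc k)}. (w j - w 1)\<^sup>2))"
    by (simp add: sum_all sum_distrib_left)
  also have "\<dots> \<le> (\<Sum>k\<in>{1..K}. Hk N idx k * (2 * alpha\<^sup>2) + 2 * ?Hm^4 / c\<^sup>2 * (eps N * (\<Sum>i\<in>{idx k..<idx (Suc k)}. (f i)\<^sup>2)))"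
  proof (rule sum_mono)
    fix k assume k: "k \<in> {1..K}"
    let ?H = "Hk N idx k"
    have pt: "(w j - w 1)\<^sup>2 \<le> 2 * alpha\<^sup>2 + 2 * (?H * Vk k / c)\<^sup>2" if "j \<in> {idx k..<idx (Suc k)}" for j
    proof -
      have b: "\<bar>w j - w 1\<bar> \<le> alpha + ?H * Vk k / c" using w_bound[OF k] that by auto
      have nn: "0 \<le> ?H * Vk k / c" using Hk_pos[OF k] Vk_nn cpos by simp
      have "(w j - w 1)\<^sup>2 \<le> (alpha + ?H * Vk k / c)\<^sup>2"
        using b by (metis abs_le_square_iff abs_of_nonneg alpha_nn nn add_nonneg_nonneg order_trans abs_ge_zero)
      also have "\<dots> \<le> 2 * alpha\<^sup>2 + 2 * (?H * Vk k / c)\<^sup>2"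
      proof -
        have e: "2 * alpha\<^sup>2 + 2 * (?H * Vk k / c)\<^sup>2 - (alpha + ?H * Vk k / c)\<^sup>2 = (alpha - ?H * Vk k / c)\<^sup>2"
          by (simp add: power2_eq_square algebra_simps)
        show ?thesis using e zero_le_power2[of "alpha - ?H * Vk k / c"] by linarith
      qed
      finally show ?thesis .
    qed
    have "eps N * (\<Sum>j\<in>{idx k..<idx (Suc k)}. (w j - w 1)\<^sup>2) \<le> eps N * (\<Sum>j\<in>{idx k..<idx (Suc k)}. 2 * alpha\<^sup>2 + 2 * (?H * Vk k / c)\<^sup>2)"
      using pt epos by (intro mult_left_mono sum_mono) auto
    also have "\<dots> = ?H * (2 * alpha\<^sup>2) + 2 * ?H * (?H * Vk k / c)\<^sup>2"
      unfolding sum_const_elem[OF k] by (simp add: Hk_eq algebra_simps)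
    also have "2 * ?H * (?H * Vk k / c)\<^sup>2 \<le> 2 * ?Hm^4 / c\<^sup>2 * (eps N * (\<Sum>i\<in>{idx k..<idx (Suc k)}. (f i)\<^sup>2))"
    proof -
      have H: "0 \<le> ?H" "?H \<le> ?Hm" using Hk_Hm[OF k] by auto
      have H4: "?H^4 \<le> ?Hm^4" using H by (simp add: power_mono)
      have fs: "0 \<le> eps N * (\<Sum>i\<in>{idx k..<idx (Suc k)}. (f i)\<^sup>2)" using epos by (simp add: sum_nonneg)
      have "2 * ?H * (?H * Vk k / c)\<^sup>2 = 2 * ?H^3 / c\<^sup>2 * (Vk k)\<^sup>2"
        using cpos by (simp add: power2_eq_square power3_eq_cube field_simps)
      also have "\<dots> \<le> 2 * ?H^3 / c\<^sup>2 * (?H * (eps N * (\<Sum>i\<in>{idx k..<idx (Suc k)}. (f i)\<^sup>2)))"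
        using Vk_sq[OF k] H by (intro mult_left_mono) auto
      also have "\<dots> = 2 * ?H^4 / c\<^sup>2 * (eps N * (\<Sum>i\<in>{idx k..<idx (Suc k)}. (f i)\<^sup>2))"
        by (simp add: power_numeral_reduce field_simps power3_eq_cube)
      also have "\<dots> \<le> 2 * ?Hm^4 / c\<^sup>2 * (eps N * (\<Sum>i\<in>{idx k..<idx (Suc k)}. (f i)\<^sup>2))"
        using H4 fs cpos by (intro mult_right_mono divide_right_mono) auto
      finally show ?thesis .
    qed
    finally show "eps N * (\<Sum>j\<in>{idx k..<idx (Suc k)}. (w j - w 1)\<^sup>2) \<le> ?H * (2 * alpha\<^sup>2) + 2 * ?Hm^4 / c\<^sup>2 * (eps N * (\<Sum>i\<in>{idx k..<idx (Suc k)}. (f i)\<^sup>2))"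
      by simp
  qed
  also have "\<dots> = (\<Sum>k\<in>{1..K}. Hk N idx k) * (2 * alpha\<^sup>2) + 2 * ?Hm^4 / c\<^sup>2 * (eps N * (\<Sum>k\<in>{1..K}. (\<Sum>i\<in>{idx k..<idx (Suc k)}. (f i)\<^sup>2)))"
    by (simp add: sum.distrib sum_distrib_left sum_distrib_right)
  also have "\<dots> = 2 * alpha\<^sup>2 + 2 * ?Hm^4 * F2 / c\<^sup>2"
    unfolding sum_Hk F2_def sum_all[symmetric] by simp
  finally show ?thesis .
qed


definition k1 :: real where "k1 = (L0\<^sup>2 / c^3 + Lb) * (1 + C / c) + L0 / c\<^sup>2"
definition k2 :: real where "k2 = 2 * Bd * (1 + C / c)"

lemma alpha_eq: "alpha = Lf * (k1 * (Hmax N K idx)\<^sup>2 + k2 * eps N)"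
  unfolding alpha_def k1_def k2_def R0_def Q0_def using cpos by (simp add: field_simps)

lemma k_nn: "k1 \<ge> 0" "k2 \<ge> 0"
  using L0_nn Lb_nn Bd_nn cpos Cpos by (simp_all add: k1_def k2_def)

lemma sum_w0: "(\<Sum>j\<in>{1..<int N+1}. w j) = 0"
proof -
  have a: "avgX N utH = 0" "avgX N u = 0" using t0 u0 by (auto simp: UH_mean0_def UN_mean0_def)
  have "(\<Sum>j\<in>{1..<int N+1}. utH j) = 0" "(\<Sum>j\<in>{1..<int N+1}. u j) = 0"
    using a N1 by (auto simp: avgX_def sum_cl_ivl)
  then show ?thesis by (simp add: w_def sum_subtractf)
qed

lemma final_loc:
  "normX N (\<lambda>i. utH i - u i) \<le> ((2 * k1 + 2 / c) * (Hmax N K idx)\<^sup>2 + 2 * k2 * eps N) * normX N f"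
proof -
  let ?Hm = "Hmax N K idx"
  define nf where "nf = sqrt F2"
  have nf: "0 \<le> nf" "nf\<^sup>2 = F2" using F2_nn by (auto simp: nf_def)
  have wf: "(\<lambda>i. utH i - u i) = w" by (simp add: w_def fun_eq_iff)
  have ip: "ipX N w w = eps N * (\<Sum>j\<in>{1..<int N+1}. (w j)\<^sup>2)"
    by (simp add: ipX_def eps_def sum_cl_ivl power2_eq_square)
  have "(\<Sum>j\<in>{1..<int N+1}. (w j - w 1)\<^sup>2) = (\<Sum>j\<in>{1..<int N+1}. (w j)\<^sup>2) - 2 * w 1 * (\<Sum>j\<in>{1..<int N+1}. w j) + (\<Sum>j\<in>{1..<int N+1}. (w 1)\<^sup>2)"
    by (simp add: power2_eq_square algebra_simps sum.distrib sum_subtractf sum_distrib_left)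
  then have "(\<Sum>j\<in>{1..<int N+1}. (w j)\<^sup>2) \<le> (\<Sum>j\<in>{1..<int N+1}. (w j - w 1)\<^sup>2)"
    using sum_w0 by (simp add: sum_nonneg)
  then have "ipX N w w \<le> eps N * (\<Sum>j\<in>{1..<int N+1}. (w j - w 1)\<^sup>2)"
    unfolding ip using epos by (intro mult_left_mono) auto
  also have "\<dots> \<le> 2 * alpha\<^sup>2 + 2 * ?Hm^4 * F2 / c\<^sup>2" by (rule sum_w_sq)
  also have "\<dots> = 2 * alpha\<^sup>2 + 2 * (?Hm\<^sup>2 * nf / c)\<^sup>2"
    using nf(2) by (simp add: power2_eq_square power_mult_distrib field_simps power4_eq_xxxx)
  also have "\<dots> \<le> (2 * alpha + 2 * (?Hm\<^sup>2 * nf / c))\<^sup>2"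
  proof -
    have gen: "2 * a\<^sup>2 + 2 * b\<^sup>2 \<le> (2 * a + 2 * b)\<^sup>2" if "0 \<le> a" "0 \<le> (b::real)" for a b
    proof -
      have "0 \<le> a * b" using that by simp
      then show ?thesis by (simp add: power2_eq_square algebra_simps)
    qed
    show ?thesis by (rule gen) (use alpha_nn nf cpos in simp_all)
  qed
  finally have ipb: "ipX N w w \<le> (2 * alpha + 2 * (?Hm\<^sup>2 * nf / c))\<^sup>2" .
  have pos: "0 \<le> 2 * alpha + 2 * (?Hm\<^sup>2 * nf / c)" using alpha_nn nf cpos by simp
  have "normX N w \<le> 2 * alpha + 2 * (?Hm\<^sup>2 * nf / c)"
    unfolding normX_def using ipb pos by (simp add: real_sqrt_le_iff real_le_lsqrt)
  also have "alpha \<le> (k1 * ?Hm\<^sup>2 + k2 * eps N) * nf"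
    unfolding alpha_eq using Lf_nf k_nn epos unfolding nf_def
    by (metis mult.commute mult_right_mono add_nonneg_nonneg mult_nonneg_nonneg zero_le_power2 less_imp_le)
  then have "2 * alpha + 2 * (?Hm\<^sup>2 * nf / c) \<le> 2 * ((k1 * ?Hm\<^sup>2 + k2 * eps N) * nf) + 2 * (?Hm\<^sup>2 * nf / c)"
    by simp
  also have "\<dots> = ((2 * k1 + 2 / c) * ?Hm\<^sup>2 + 2 * k2 * eps N) * nf" by (simp add: algebra_simps)
  finally show ?thesis unfolding wf nf_def normX_f[symmetric] .
qed


lemma final_loc2:
  "normX N (\<lambda>i. utH i - u i) \<le> ((2 * (((C\<^sup>2 * C' / c\<^sup>2)\<^sup>2 / c^3 + C' / c\<^sup>2) * (1 + C / c) + (C\<^sup>2 * C' / c\<^sup>2) / c\<^sup>2) + 2 / c) * (Hmax N K idx)\<^sup>2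
     + 2 * (2 * (2 * real p * C' / c\<^sup>2 + real p / c) * (1 + C / c)) * eps N) * normX N f"
  using final_loc unfolding k1_def k2_def L0_def Lb_def Bd_def .

end

lemma normX_L2: "normX N g = sqrt (1 / real N) * L2_set g {1..int N}"
  unfolding normX_def ipX_def L2_set_def power2_eq_square by (simp only: real_sqrt_mult)

lemma normX_tri:
  "normX N (\<lambda>i. a i - b i) \<le> normX N (\<lambda>i. a i - d i) + normX N (\<lambda>i. d i - b i)"
proof -
  have "L2_set (\<lambda>i. a i - b i) {1..int N} = L2_set (\<lambda>i. (a i - d i) + (d i - b i)) {1..int N}" by simp
  also have "\<dots> \<le> L2_set (\<lambda>i. a i - d i) {1..int N} + L2_set (\<lambda>i. d i - b i) {1..int N}"
    by (rule L2_set_triangle_ineq)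
  finally have "sqrt (1 / real N) * L2_set (\<lambda>i. a i - b i) {1..int N}
      \<le> sqrt (1 / real N) * (L2_set (\<lambda>i. a i - d i) {1..int N} + L2_set (\<lambda>i. d i - b i) {1..int N})"
    by (intro mult_left_mono) auto
  then show ?thesis unfolding normX_L2 by (simp add: distrib_left)
qed

lemma Linf_bound:
  assumes "1 \<le> i" "i \<le> int N" "1 \<le> j" "j \<le> int p"
  shows "\<bar>g i j\<bar> \<le> Linf_Np N p g"
proof -
  have sub: "{\<bar>g i j\<bar> | i j. 1 \<le> i \<and> i \<le> int N \<and> 1 \<le> j \<and> j \<le> int p}
      \<subseteq> (\<lambda>(i,j). \<bar>g i j\<bar>) ` ({1..int N} \<times> {1..int p})" by auto
  have fin: "finite {\<bar>g i j\<bar> | i j. 1 \<le> i \<and> i \<le> int N \<and> 1 \<le> j \<and> j \<le> int p}"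
    by (rule finite_subset[OF sub]) auto
  show ?thesis unfolding Linf_Np_def by (rule Max_ge[OF fin]) (use assms in blast)
qed


theorem theorem6p2:
  fixes p :: nat and c_psi C_psi C'_psi :: real
  assumes "1 \<le> p" and "0 < c_psi"
  shows "\<exists>C6 C7 :: real. \<forall>(N::nat) (psi :: int \<Rightarrow> int \<Rightarrow> real) (f :: int \<Rightarrow> real)
      (K::nat) (idx :: nat \<Rightarrow> int) (rep :: nat \<Rightarrow> int) (coll :: nat \<Rightarrow> int)
      (u :: int \<Rightarrow> real) (uH :: int \<Rightarrow> real) (utH :: int \<Rightarrow> real).
     1 \<le> N \<and> p dvd N \<and>
     two_scale N p psi \<and>
     (\<forall>i j. c_psi \<le> psi i j \<and> psi i j \<le> C_psi) \<and>
     Linf_Np N p (DX N psi) \<le> C'_psi \<and>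
     UN_per N f \<and> avgX N f = 0 \<and>
     mesh N K idx \<and> sampling p K idx rep coll \<and>
     UN_mean0 N u \<and>
     (\<forall>v. UN_per N v \<longrightarrow> ipX N (\<lambda>i. psi_eps psi i * Dd N u i) (Dd N v) = ipX N f v) \<and>
     UH_mean0 N K idx uH \<and>
     (\<forall>v. UH_mean0 N K idx v \<longrightarrow> hqc_form N p K psi idx rep coll uH v = ipX N f v) \<and>
     UH_mean0 N K idx utH \<and>
     (\<forall>v. UH_mean0 N K idx v \<longrightarrow> ipX N (\<lambda>i. psi0 p psi i * Dd N utH i) (Dd N v) = ipX N f v)
     \<longrightarrow> normX N (\<lambda>i. uH i - u i)
           \<le> (C6 * (Hmax N K idx)\<^sup>2 + C7 * eps N) * normX N f + normX N (\<lambda>i. uH i - utH i)"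
proof -
  have key: "normX N (\<lambda>i. uH i - u i)
           \<le> ((2 * (((C_psi\<^sup>2 * C'_psi / c_psi\<^sup>2)\<^sup>2 / c_psi^3 + C'_psi / c_psi\<^sup>2) * (1 + C_psi / c_psi) + (C_psi\<^sup>2 * C'_psi / c_psi\<^sup>2) / c_psi\<^sup>2) + 2 / c_psi) * (Hmax N K idx)\<^sup>2 + (2 * (2 * (2 * real p * C'_psi / c_psi\<^sup>2 + real p / c_psi) * (1 + C_psi / c_psi))) * eps N) * normX N f + normX N (\<lambda>i. uH i - utH i)"
    if H: "1 \<le> N \<and> p dvd N \<and>
     two_scale N p psi \<and>
     (\<forall>i j. c_psi \<le> psi i j \<and> psi i j \<le> C_psi) \<and>
     Linf_Np N p (DX N psi) \<le> C'_psi \<and>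
     UN_per N f \<and> avgX N f = 0 \<and>
     mesh N K idx \<and> sampling p K idx rep coll \<and>
     UN_mean0 N u \<and>
     (\<forall>v. UN_per N v \<longrightarrow> ipX N (\<lambda>i. psi_eps psi i * Dd N u i) (Dd N v) = ipX N f v) \<and>
     UH_mean0 N K idx uH \<and>
     (\<forall>v. UH_mean0 N K idx v \<longrightarrow> hqc_form N p K psi idx rep coll uH v = ipX N f v) \<and>
     UH_mean0 N K idx utH \<and>
     (\<forall>v. UH_mean0 N K idx v \<longrightarrow> ipX N (\<lambda>i. psi0 p psi i * Dd N utH i) (Dd N v) = ipX N f v)"
    for N psi f K idx rep coll u uH utH
  proof -
    have N1: "1 \<le> N" and ts: "two_scale N p psi" and LC: "Linf_Np N p (DX N psi) \<le> C'_psi"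
      using H by auto
    have Np: "int N > 0" using N1 by simp
    have pp: "int p > 0" using assms(1) by simp
    have e: "eps N > 0" using N1 by (simp add: eps_def)
    have lip: "\<forall>i j. \<bar>psi (i+1) j - psi i j\<bar> \<le> eps N * C'_psi"
    proof (intro allI)
      fix i j
      define i0 where "i0 = (i-1) mod int N + 1"
      define q where "q = (i-1) div int N"
      define j0 where "j0 = (j-1) mod int p + 1"
      define r where "r = (j-1) div int p"
      have iq: "i = i0 + int N * q" unfolding i0_def q_def by (metis add.commute diff_add_cancel mod_mult_div_eq add.assoc)
      have jr: "j = j0 + int p * r" unfolding j0_def r_def by (metis add.commute diff_add_cancel mod_mult_div_eq add.assoc)
      have "(i-1) mod int N < int N" "0 \<le> (i-1) mod int N" using Np by auto
      then have i0r: "1 \<le> i0" "i0 \<le> int N" unfolding i0_def by linarith+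
      have "(j-1) mod int p < int p" "0 \<le> (j-1) mod int p" using pp by auto
      then have j0r: "1 \<le> j0" "j0 \<le> int p" unfolding j0_def by linarith+
      have pI: "per (int N) (\<lambda>i. psi i y)" for y using ts by (simp add: two_scale_def per_def)
      have pJ: "per (int p) (\<lambda>j. psi x j)" for x using ts by (simp add: two_scale_def per_def)
      have e1: "psi (i+1) j = psi (i0+1) j0"
      proof -
        have "psi (i+1) j = psi ((i0+1) + int N * q) j" using iq by (simp add: algebra_simps)
        also have "\<dots> = psi (i0+1) j" using per_shift_mult[OF pI[of j], of "i0+1" q] by simp
        also have "\<dots> = psi (i0+1) (j0 + int p * r)" using jr by simp
        also have "\<dots> = psi (i0+1) j0" using per_shift_mult[OF pJ[of "i0+1"], of j0 r] by simp
        finally show ?thesis .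
      qed
      have e2: "psi i j = psi i0 j0"
      proof -
        have "psi i j = psi (i0 + int N * q) j" using iq by simp
        also have "\<dots> = psi i0 j" using per_shift_mult[OF pI[of j], of i0 q] by simp
        also have "\<dots> = psi i0 (j0 + int p * r)" using jr by simp
        also have "\<dots> = psi i0 j0" using per_shift_mult[OF pJ[of i0], of j0 r] by simp
        finally show ?thesis .
      qed
      have "\<bar>DX N psi i0 j0\<bar> \<le> C'_psi" using Linf_bound[where g="DX N psi", OF i0r j0r] LC by linarith
      then have "\<bar>psi (i0+1) j0 - psi i0 j0\<bar> / eps N \<le> C'_psi" using e by (simp add: DX_def abs_div)
      then show "\<bar>psi (i+1) j - psi i j\<bar> \<le> eps N * C'_psi" unfolding e1 e2 using e by (simp add: field_simps)
    qed
    interpret hs N p c_psi C_psi C'_psi psi f K idx u utH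
    proof
      show "1 \<le> p" by (rule assms(1))
      show "0 < c_psi" by (rule assms(2))
      show "\<forall>i j. \<bar>psi (i+1) j - psi i j\<bar> \<le> eps N * C'_psi" by (rule lip)
      show "per (int N) f" using H by (simp add: UN_per_def)
    qed (use H in auto)
    have "normX N (\<lambda>i. uH i - u i) \<le> normX N (\<lambda>i. uH i - utH i) + normX N (\<lambda>i. utH i - u i)"
      by (rule normX_tri)
    then show ?thesis using final_loc2 by linarith
  qed
  show ?thesis
    apply (rule exI[where x="2 * (((C_psi\<^sup>2 * C'_psi / c_psi\<^sup>2)\<^sup>2 / c_psi^3 + C'_psi / c_psi\<^sup>2) * (1 + C_psi / c_psi) + (C_psi\<^sup>2 * C'_psi / c_psi\<^sup>2) / c_psi\<^sup>2) + 2 / c_psi"])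
    apply (rule exI[where x="2 * (2 * (2 * real p * C'_psi / c_psi\<^sup>2 + real p / c_psi) * (1 + C_psi / c_psi))"])
    apply (intro allI impI)
    apply (erule key)
    done
qed

end
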